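(* Let $p>2$ be an integer, $\theta\in(0,1)$, $\eta\ge0$, let $\bm X\in\mathbb R^{n\times r}$ have i.i.d. $\mathcal{BG}(\theta)$ entries, $\bm G\in\mathbb R^{n\times r}$ i.i.d. $\mathcal N(0,\eta^2)$ entries independent of $\bm X$, $\bm Y=\bm X+\bm G$, and $\gamma_p=2^{p/2}\Gamma(\frac{p+1}{2})/\sqrt\pi$. For every $\bm Q\in\mathbb O(n)$ there exists $\bm P\in\mathrm{SP}(n)$ with $$\theta(1+\eta^2)^{p/2}+(1-\theta)\eta^p-\frac{1}{nr\gamma_p}\mathbb E\|\bm Q\bm Y\|_p^p\ge\frac{\theta(1-\theta)}{2nC_{\eta,p}}\|\bm Q-\bm P\|_F^2,$$ where $C_{\eta,p}=\big((1+\eta^2)^{p/2}+\eta^p-2(0.5+\eta^2)^{p/2}\big)^{-1}$.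
   Context: $\mathcal{BG}(\theta)$ is the law of $b\cdot g$ with $b\sim\mathrm{Ber}(\theta)$, $g\sim\mathcal N(0,1)$ independent. $\mathbb O(n)$: real orthogonal $n\times n$ matrices; $\mathrm{SP}(n)$: signed permutation matrices; $\|\bm M\|_p^p=\sum_{i,j}|M_{ij}|^p$; $\|\cdot\|_F$ the Frobenius norm; $\Gamma$ the Gamma function. *)

theory Defs
  imports "HOL-Analysis.Analysis" "HOL-Probability.Probability"
begin

definition std_normal_measure :: "real measure" where
  "std_normal_measure = density lborel std_normal_density"

definition BG :: "real \<Rightarrow> real measure" where
  "BG \<theta> = distr (measure_pmf (bernoulli_pmf \<theta>) \<Otimes>\<^sub>M std_normal_measure) borel
              (\<lambda>(b, g). (if b then 1 else 0) * g)"

text \<open>Law of the pair (X, Z) where X has i.i.d. BG(theta) entries and Z has i.i.d.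
  N(0,1) entries, independent of X; the noise is G = eta * Z (i.i.d. N(0,eta^2), also for eta = 0).\<close>
definition XZ_law :: "real \<Rightarrow> (('n::finite \<times> 'r::finite \<Rightarrow> real) \<times> ('n \<times> 'r \<Rightarrow> real)) measure" where
  "XZ_law \<theta> = (PiM UNIV (\<lambda>_. BG \<theta>)) \<Otimes>\<^sub>M (PiM UNIV (\<lambda>_. std_normal_measure))"

definition Y_mat :: "real \<Rightarrow> ('n::finite \<times> 'r::finite \<Rightarrow> real) \<Rightarrow> ('n \<times> 'r \<Rightarrow> real) \<Rightarrow> real^'r^'n" where
  "Y_mat \<eta> x z = (\<chi> i j. x (i, j) + \<eta> * z (i, j))"

definition entry_pnorm_pow :: "nat \<Rightarrow> real^'c^'r \<Rightarrow> real" where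
  "entry_pnorm_pow p M = (\<Sum>i\<in>UNIV. \<Sum>j\<in>UNIV. \<bar>M $ i $ j\<bar> ^ p)"

definition frob_norm :: "real^'c^'r \<Rightarrow> real" where
  "frob_norm M = sqrt (\<Sum>i\<in>UNIV. \<Sum>j\<in>UNIV. (M $ i $ j)\<^sup>2)"

definition signed_perm_matrix :: "real^'n^'n \<Rightarrow> bool" where
  "signed_perm_matrix P \<longleftrightarrow> (\<exists>\<sigma> s. bij (\<sigma> :: 'n \<Rightarrow> 'n) \<and> (\<forall>i. s i \<in> {-1, 1::real}) \<and>
      (\<forall>i j. P $ i $ j = (if j = \<sigma> i then s i else 0)))"

definition gamma_p :: "nat \<Rightarrow> real" where
  "gamma_p p = 2 powr (real p / 2) * Gamma ((real p + 1) / 2) / sqrt pi"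

definition C_eta_p :: "real \<Rightarrow> nat \<Rightarrow> real" where
  "C_eta_p \<eta> p = inverse ((1 + \<eta>\<^sup>2) powr (real p / 2) + \<eta> ^ p - 2 * (0.5 + \<eta>\<^sup>2) powr (real p / 2))"

end

theory Submission
  imports Defs
begin


definition Gm :: "real \<Rightarrow> (real \<Rightarrow> ennreal) \<Rightarrow> real \<Rightarrow> ennreal" where
  "Gm v h s = (if v = 0 then h s else \<integral>\<^sup>+y. ennreal (normal_density 0 (sqrt v) y) * h (s + y) \<partial>lborel)"

lemma Gm_meas[measurable]:
  assumes [measurable]: "h \<in> borel_measurable borel"
  shows "Gm v h \<in> borel_measurable borel"
  unfolding Gm_def by measurable

lemma nd_scale:
  assumes "c \<noteq> 0"
  shows "\<bar>c\<bar> * normal_density 0 \<bar>c\<bar> (c * x) = std_normal_density x"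
proof -
  have "sqrt (2 * pi * \<bar>c\<bar>\<^sup>2) = sqrt (2*pi) * \<bar>c\<bar>"
    by (simp add: real_sqrt_mult)
  moreover have "(c * x)\<^sup>2 / (2 * \<bar>c\<bar>\<^sup>2) = x\<^sup>2 / 2"
    using assms by (simp add: power_mult_distrib)
  ultimately show ?thesis using assms
    by (simp add: normal_density_def)
qed

lemma scale_std:
  assumes "c \<noteq> 0" and [measurable]: "F \<in> borel_measurable borel"
  shows "(\<integral>\<^sup>+g. ennreal (std_normal_density g) * F (c * g) \<partial>lborel)
       = (\<integral>\<^sup>+y. ennreal (normal_density 0 \<bar>c\<bar> y) * F y \<partial>lborel)"
proof -
  have "(\<integral>\<^sup>+y. ennreal (normal_density 0 \<bar>c\<bar> y) * F y \<partial>lborel)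
     = ennreal \<bar>c\<bar> * (\<integral>\<^sup>+x. ennreal (normal_density 0 \<bar>c\<bar> (0 + c * x)) * F (0 + c * x) \<partial>lborel)"
    by (rule nn_integral_real_affine) (use assms in auto)
  also have "\<dots> = (\<integral>\<^sup>+x. ennreal \<bar>c\<bar> * (ennreal (normal_density 0 \<bar>c\<bar> (c * x)) * F (c * x)) \<partial>lborel)"
    by (subst nn_integral_cmult) auto
  also have "\<dots> = (\<integral>\<^sup>+g. ennreal (std_normal_density g) * F (c * g) \<partial>lborel)"
  proof (rule nn_integral_cong)
    fix x
    have "ennreal \<bar>c\<bar> * ennreal (normal_density 0 \<bar>c\<bar> (c * x)) = ennreal (std_normal_density x)"
      using nd_scale[OF assms(1), of x] by (simp add: ennreal_mult[symmetric])
    then show "ennreal \<bar>c\<bar> * (ennreal (normal_density 0 \<bar>c\<bar> (c * x)) * F (c * x))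
        = ennreal (std_normal_density x) * F (c * x)" by (simp add: mult.assoc[symmetric])
  qed
  finally show ?thesis ..
qed


lemma conv_step:
  assumes "0 < \<sigma>" "0 < \<tau>" and [measurable]: "h \<in> borel_measurable borel"
  shows "(\<integral>\<^sup>+u. ennreal (normal_density 0 \<tau> u) * (\<integral>\<^sup>+y. ennreal (normal_density 0 \<sigma> y) * h (s + u + y) \<partial>lborel) \<partial>lborel)
       = (\<integral>\<^sup>+w. ennreal (normal_density 0 (sqrt (\<sigma>\<^sup>2 + \<tau>\<^sup>2)) w) * h (s + w) \<partial>lborel)"
proof -
  have inner: "(\<integral>\<^sup>+y. ennreal (normal_density 0 \<sigma> y) * h (s + u + y) \<partial>lborel)
      = (\<integral>\<^sup>+w. ennreal (normal_density 0 \<sigma> (w - u)) * h (s + w) \<partial>lborel)" for u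
  proof -
    show ?thesis
      using nn_integral_real_affine[of "\<lambda>w. ennreal (normal_density 0 \<sigma> (w - u)) * h (s + w)" 1 u]
      by (simp add: add.assoc)
  qed
  have "(\<integral>\<^sup>+u. ennreal (normal_density 0 \<tau> u) * (\<integral>\<^sup>+y. ennreal (normal_density 0 \<sigma> y) * h (s + u + y) \<partial>lborel) \<partial>lborel)
     = (\<integral>\<^sup>+u. (\<integral>\<^sup>+w. ennreal (normal_density 0 \<tau> u) * (ennreal (normal_density 0 \<sigma> (w - u)) * h (s + w)) \<partial>lborel) \<partial>lborel)"
    by (simp add: inner nn_integral_cmult)
  also have "\<dots> = (\<integral>\<^sup>+w. (\<integral>\<^sup>+u. ennreal (normal_density 0 \<tau> u) * (ennreal (normal_density 0 \<sigma> (w - u)) * h (s + w)) \<partial>lborel) \<partial>lborel)"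
    by (rule lborel_pair.Fubini'[symmetric]) measurable
  also have "\<dots> = (\<integral>\<^sup>+w. h (s + w) * (\<integral>\<^sup>+u. ennreal (normal_density 0 \<sigma> (w - u) * normal_density 0 \<tau> u) \<partial>lborel) \<partial>lborel)"
    by (subst nn_integral_cmult[symmetric]) (auto intro!: nn_integral_cong simp: ennreal_mult' mult_ac)
  also have "\<dots> = (\<integral>\<^sup>+w. ennreal (normal_density 0 (sqrt (\<sigma>\<^sup>2 + \<tau>\<^sup>2)) w) * h (s + w) \<partial>lborel)"
    using conv_normal_density_zero_mean[OF assms(1,2)]
    by (auto intro!: nn_integral_cong simp: fun_eq_iff mult.commute)
  finally show ?thesis .
qed

lemma nn_std:
  assumes [measurable]: "f \<in> borel_measurable borel"
  shows "(\<integral>\<^sup>+g. f g \<partial>std_normal_measure) = (\<integral>\<^sup>+g. ennreal (std_normal_density g) * f g \<partial>lborel)"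
  unfolding std_normal_measure_def by (subst nn_integral_density) auto

lemma prob_std: "prob_space std_normal_measure"
  unfolding std_normal_measure_def by (rule prob_space_normal_density) simp

lemma space_std[simp]: "space std_normal_measure = UNIV" and sets_std[simp]: "sets std_normal_measure = sets borel"
  unfolding std_normal_measure_def by auto

lemma emeasure_std_UNIV[simp]: "emeasure std_normal_measure UNIV = 1"
  using prob_space.emeasure_space_1[OF prob_std] by simp

lemma nn_std_const: "(\<integral>\<^sup>+g. c \<partial>std_normal_measure) = c"
  using prob_space.emeasure_space_1[OF prob_std] by (simp add: nn_integral_const)

lemma F1:
  assumes "v \<ge> 0" and [measurable]: "h \<in> borel_measurable borel"
  shows "(\<integral>\<^sup>+g. Gm v h (s + c * g) \<partial>std_normal_measure) = Gm (v + c\<^sup>2) h s"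
proof (cases "c = 0")
  case True
  then show ?thesis by simp
next
  case c: False
  have c2: "c\<^sup>2 > 0" using c by simp
  show ?thesis
  proof (cases "v = 0")
    case True
    have "(\<integral>\<^sup>+g. Gm v h (s + c * g) \<partial>std_normal_measure) = (\<integral>\<^sup>+g. ennreal (std_normal_density g) * h (s + c * g) \<partial>lborel)"
      using True by (subst nn_std) (auto simp: Gm_def)
    also have "\<dots> = (\<integral>\<^sup>+y. ennreal (normal_density 0 \<bar>c\<bar> y) * h (s + y) \<partial>lborel)"
      by (rule scale_std[OF c, where F="\<lambda>y. h (s + y)"]) measurable
    also have "\<dots> = Gm (v + c\<^sup>2) h s" using True c2 by (simp add: Gm_def)
    finally show ?thesis .
  next
    case False
    then have v: "v > 0" using assms(1) by simp
    have "(\<integral>\<^sup>+g. Gm v h (s + c * g) \<partial>std_normal_measure)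
      = (\<integral>\<^sup>+g. ennreal (std_normal_density g) * (\<lambda>u. \<integral>\<^sup>+y. ennreal (normal_density 0 (sqrt v) y) * h (s + u + y) \<partial>lborel) (c * g) \<partial>lborel)"
      using v by (subst nn_std) (auto simp: Gm_def add.assoc)
    also have "\<dots> = (\<integral>\<^sup>+u. ennreal (normal_density 0 \<bar>c\<bar> u) * (\<integral>\<^sup>+y. ennreal (normal_density 0 (sqrt v) y) * h (s + u + y) \<partial>lborel) \<partial>lborel)"
      by (rule scale_std[OF c]) measurable
    also have "\<dots> = (\<integral>\<^sup>+w. ennreal (normal_density 0 (sqrt ((sqrt v)\<^sup>2 + \<bar>c\<bar>\<^sup>2)) w) * h (s + w) \<partial>lborel)"
      by (rule conv_step) (use v c in auto)
    also have "\<dots> = Gm (v + c\<^sup>2) h s"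
    proof -
      have "v + c\<^sup>2 \<noteq> 0" using v c2 by linarith
      then show ?thesis using v by (simp add: Gm_def)
    qed
    finally show ?thesis .
  qed
qed


lemma meas_mult_pmf[measurable]:
  "(\<lambda>(b, g). (if b then 1 else 0) * g :: real) \<in> borel_measurable (measure_pmf q \<Otimes>\<^sub>M std_normal_measure)"
proof -
  have "(\<lambda>(b, g). (if b then 1 else 0) * g :: real) \<in> borel_measurable (count_space UNIV \<Otimes>\<^sub>M (borel::real measure))"
    by measurable
  moreover have "sets (measure_pmf q \<Otimes>\<^sub>M std_normal_measure) = sets (count_space UNIV \<Otimes>\<^sub>M (borel::real measure))"
    by (rule sets_pair_measure_cong) auto
  ultimately show ?thesis by (simp add: measurable_def space_pair_measure)
qed

lemma F2:
  assumes "0 \<le> \<theta>" "\<theta> \<le> 1" "v \<ge> 0" and [measurable]: "h \<in> borel_measurable borel"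
  shows "(\<integral>\<^sup>+x. Gm v h (s + c * x) \<partial>BG \<theta>) = ennreal \<theta> * Gm (v + c\<^sup>2) h s + ennreal (1 - \<theta>) * Gm v h s"
proof -
  interpret P: pair_sigma_finite "measure_pmf (bernoulli_pmf \<theta>)" std_normal_measure
    by (intro pair_sigma_finite.intro prob_space_imp_sigma_finite prob_std prob_space_measure_pmf)
  have "(\<integral>\<^sup>+x. Gm v h (s + c * x) \<partial>BG \<theta>)
      = (\<integral>\<^sup>+w. Gm v h (s + c * ((\<lambda>(b, g). (if b then 1 else 0) * g) w)) \<partial>(measure_pmf (bernoulli_pmf \<theta>) \<Otimes>\<^sub>M std_normal_measure))"
    unfolding BG_def by (subst nn_integral_distr) auto
  also have "\<dots> = (\<integral>\<^sup>+b. (\<integral>\<^sup>+g. Gm v h (s + c * ((if b then 1 else 0) * g)) \<partial>std_normal_measure) \<partial>measure_pmf (bernoulli_pmf \<theta>))"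
  proof -
    have m: "(\<lambda>w. Gm v h (s + c * ((\<lambda>(b, g). (if b then 1 else 0) * g) w))) \<in> borel_measurable (measure_pmf (bernoulli_pmf \<theta>) \<Otimes>\<^sub>M std_normal_measure)"
      by (rule measurable_compose[OF _ Gm_meas[OF assms(4)]]) measurable
    have sf: "sigma_finite_measure std_normal_measure"
      by (intro prob_space_imp_sigma_finite prob_std)
    show ?thesis using sigma_finite_measure.nn_integral_fst[OF sf m] by simp
  qed
  also have "\<dots> = (\<integral>\<^sup>+g. Gm v h (s + c * g) \<partial>std_normal_measure) * \<theta> + (\<integral>\<^sup>+g. Gm v h s \<partial>std_normal_measure) * (1 - \<theta>)"
    using assms by simp
  also have "\<dots> = ennreal \<theta> * Gm (v + c\<^sup>2) h s + ennreal (1 - \<theta>) * Gm v h s"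
    using F1[OF assms(3,4), of s c] by (simp add: mult.commute)
  finally show ?thesis .
qed


lemma psf_std: "product_sigma_finite (\<lambda>_. std_normal_measure)"
  by (simp add: product_sigma_finite_def prob_space_imp_sigma_finite prob_std)

lemma meas_lin:
  assumes "sets M = sets borel" "K \<subseteq> I"
  shows "(\<lambda>z. s + (\<Sum>k\<in>K. d k * z k :: real)) \<in> borel_measurable (PiM I (\<lambda>_. M))"
proof -
  have "(\<lambda>z. z k) \<in> borel_measurable (PiM I (\<lambda>_. M))" if "k \<in> I" for k
    using measurable_component_singleton[OF that, of "\<lambda>_. M"] measurable_cong_sets[OF refl assms(1)]
    by blast
  then show ?thesis using assms(2) by (intro borel_measurable_add borel_measurable_sum borel_measurable_times) auto
qed

lemma meas_Gm_lin:
  assumes "sets M = sets borel" "K \<subseteq> I" "h \<in> borel_measurable borel"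
  shows "(\<lambda>z. Gm v h (s + (\<Sum>k\<in>K. d k * z k :: real))) \<in> borel_measurable (PiM I (\<lambda>_. M))"
  by (rule measurable_compose[OF meas_lin[OF assms(1,2)] Gm_meas[OF assms(3)]])

lemma Zl:
  assumes "finite K" and [measurable]: "h \<in> borel_measurable borel"
  shows "v \<ge> 0 \<Longrightarrow> (\<integral>\<^sup>+z. Gm v h (s + (\<Sum>k\<in>K. d k * z k)) \<partial>PiM K (\<lambda>_. std_normal_measure))
     = Gm (v + (\<Sum>k\<in>K. (d k)\<^sup>2)) h s"
  using assms(1)
proof (induction K arbitrary: v s rule: finite_induct)
  case empty
  then show ?case
    by (simp add: PiM_empty)
next
  case (insert i K)
  interpret product_sigma_finite "\<lambda>_. std_normal_measure" by (rule psf_std)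
  have "(\<integral>\<^sup>+z. Gm v h (s + (\<Sum>k\<in>insert i K. d k * z k)) \<partial>PiM (insert i K) (\<lambda>_. std_normal_measure))
     = (\<integral>\<^sup>+x. (\<integral>\<^sup>+y. Gm v h (s + (\<Sum>k\<in>insert i K. d k * (x(i := y)) k)) \<partial>std_normal_measure) \<partial>PiM K (\<lambda>_. std_normal_measure))"
    by (rule product_nn_integral_insert) (use insert meas_Gm_lin[of std_normal_measure "insert i K" "insert i K" h v s d] in auto)
  also have "\<dots> = (\<integral>\<^sup>+x. Gm (v + (d i)\<^sup>2) h (s + (\<Sum>k\<in>K. d k * x k)) \<partial>PiM K (\<lambda>_. std_normal_measure))"
  proof (rule nn_integral_cong)
    fix x
    have "(\<Sum>k\<in>insert i K. d k * (x(i := y)) k) = (\<Sum>k\<in>K. d k * x k) + d i * y" for y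
    proof -
      have "(\<Sum>k\<in>K. d k * (x(i := y)) k) = (\<Sum>k\<in>K. d k * x k)"
        by (rule sum.cong) (use insert in auto)
      then show ?thesis using insert by simp
    qed
    then show "(\<integral>\<^sup>+y. Gm v h (s + (\<Sum>k\<in>insert i K. d k * (x(i := y)) k)) \<partial>std_normal_measure)
        = Gm (v + (d i)\<^sup>2) h (s + (\<Sum>k\<in>K. d k * x k))"
      using F1[OF insert.prems assms(2), of "s + (\<Sum>k\<in>K. d k * x k)" "d i"] by (simp add: add.assoc)
  qed
  also have "\<dots> = Gm (v + (d i)\<^sup>2 + (\<Sum>k\<in>K. (d k)\<^sup>2)) h s"
    by (rule insert.IH) (use insert.prems in auto)
  finally show ?case using insert by (simp add: add.assoc)
qed


definition wt :: "real \<Rightarrow> 'k set \<Rightarrow> 'k set \<Rightarrow> real" where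
  "wt \<theta> K B = \<theta> ^ card B * (1 - \<theta>) ^ card (K - B)"

lemma sum_Pow_insert:
  assumes "finite K" "i \<notin> K"
  shows "sum F (Pow (insert i K)) = sum F (Pow K) + sum (\<lambda>B. F (insert i B)) (Pow K)"
proof -
  have "Pow (insert i K) = Pow K \<union> insert i ` Pow K" by (rule Pow_insert)
  moreover have "Pow K \<inter> insert i ` Pow K = {}" using assms by auto
  moreover have "inj_on (insert i) (Pow K)"
  proof (rule inj_onI)
    fix x y assume "x \<in> Pow K" "y \<in> Pow K" "insert i x = insert i y"
    moreover have "i \<notin> x" "i \<notin> y" using assms \<open>x \<in> Pow K\<close> \<open>y \<in> Pow K\<close> by auto
    ultimately show "x = y" by (metis insert_ident)
  qed
  ultimately show ?thesis using assms
    by (simp add: sum.union_disjoint sum.reindex)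
qed

lemma wt_insert1:
  assumes "finite K" "i \<notin> K" "B \<subseteq> K"
  shows "wt \<theta> (insert i K) B = (1 - \<theta>) * wt \<theta> K B"
proof -
  have "insert i K - B = insert i (K - B)" using assms by auto
  then show ?thesis using assms by (simp add: wt_def)
qed

lemma wt_insert2:
  assumes "finite K" "i \<notin> K" "B \<subseteq> K"
  shows "wt \<theta> (insert i K) (insert i B) = \<theta> * wt \<theta> K B"
proof -
  have "insert i K - insert i B = K - B" using assms by auto
  moreover have "i \<notin> B" using assms by blast
  then have "card (insert i B) = Suc (card B)" using assms finite_subset[OF assms(3)] by simp
  ultimately show ?thesis using assms by (simp add: wt_def)
qed

lemma wt_nonneg: "0 \<le> \<theta> \<Longrightarrow> \<theta> \<le> 1 \<Longrightarrow> 0 \<le> wt \<theta> K B"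
  by (simp add: wt_def)

lemma prob_BG: "0 \<le> \<theta> \<Longrightarrow> \<theta> \<le> 1 \<Longrightarrow> prob_space (BG \<theta>)"
  unfolding BG_def
  by (intro prob_space.prob_space_distr prob_space_pair prob_std prob_space_measure_pmf) auto

lemma sets_BG[simp]: "sets (BG \<theta>) = sets borel"
  unfolding BG_def by simp

lemma psf_BG: "0 \<le> \<theta> \<Longrightarrow> \<theta> \<le> 1 \<Longrightarrow> product_sigma_finite (\<lambda>_. BG \<theta>)"
  by (simp add: product_sigma_finite_def prob_space_imp_sigma_finite prob_BG)

lemma Xl:
  assumes "finite K" and [measurable]: "h \<in> borel_measurable borel" and th: "0 \<le> \<theta>" "\<theta> \<le> 1"
  shows "v \<ge> 0 \<Longrightarrow> (\<integral>\<^sup>+x. Gm v h (s + (\<Sum>k\<in>K. c k * x k)) \<partial>PiM K (\<lambda>_. BG \<theta>))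
     = (\<Sum>B\<in>Pow K. ennreal (wt \<theta> K B) * Gm (v + (\<Sum>k\<in>B. (c k)\<^sup>2)) h s)"
  using assms(1)
proof (induction K arbitrary: v rule: finite_induct)
  case empty
  then show ?case
    by (simp add: PiM_empty wt_def)
next
  case (insert i K)
  interpret product_sigma_finite "\<lambda>_. BG \<theta>" by (rule psf_BG[OF th])
  let ?S = "\<lambda>x. s + (\<Sum>k\<in>K. c k * x k)"
  have "(\<integral>\<^sup>+x. Gm v h (s + (\<Sum>k\<in>insert i K. c k * x k)) \<partial>PiM (insert i K) (\<lambda>_. BG \<theta>))
     = (\<integral>\<^sup>+x. (\<integral>\<^sup>+y. Gm v h (s + (\<Sum>k\<in>insert i K. c k * (x(i := y)) k)) \<partial>BG \<theta>) \<partial>PiM K (\<lambda>_. BG \<theta>))"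
    by (rule product_nn_integral_insert) (use insert meas_Gm_lin[of "BG \<theta>" "insert i K" "insert i K" h v s c] in auto)
  also have "\<dots> = (\<integral>\<^sup>+x. ennreal \<theta> * Gm (v + (c i)\<^sup>2) h (?S x) + ennreal (1 - \<theta>) * Gm v h (?S x) \<partial>PiM K (\<lambda>_. BG \<theta>))"
  proof (rule nn_integral_cong)
    fix x
    have "(\<Sum>k\<in>insert i K. c k * (x(i := y)) k) = (\<Sum>k\<in>K. c k * x k) + c i * y" for y
    proof -
      have "(\<Sum>k\<in>K. c k * (x(i := y)) k) = (\<Sum>k\<in>K. c k * x k)"
        by (rule sum.cong) (use insert in auto)
      then show ?thesis using insert by simp
    qed
    then show "(\<integral>\<^sup>+y. Gm v h (s + (\<Sum>k\<in>insert i K. c k * (x(i := y)) k)) \<partial>BG \<theta>)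
        = ennreal \<theta> * Gm (v + (c i)\<^sup>2) h (?S x) + ennreal (1 - \<theta>) * Gm v h (?S x)"
      using F2[OF th insert.prems assms(2), of "?S x" "c i"] by (simp add: add.assoc)
  qed
  also have "\<dots> = ennreal \<theta> * (\<integral>\<^sup>+x. Gm (v + (c i)\<^sup>2) h (?S x) \<partial>PiM K (\<lambda>_. BG \<theta>))
                  + ennreal (1 - \<theta>) * (\<integral>\<^sup>+x. Gm v h (?S x) \<partial>PiM K (\<lambda>_. BG \<theta>))"
    using meas_Gm_lin[of "BG \<theta>" K K h "v + (c i)\<^sup>2" s c] meas_Gm_lin[of "BG \<theta>" K K h v s c]
    by (simp add: nn_integral_add nn_integral_cmult)
  also have "\<dots> = ennreal \<theta> * (\<Sum>B\<in>Pow K. ennreal (wt \<theta> K B) * Gm (v + (c i)\<^sup>2 + (\<Sum>k\<in>B. (c k)\<^sup>2)) h s)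
                  + ennreal (1 - \<theta>) * (\<Sum>B\<in>Pow K. ennreal (wt \<theta> K B) * Gm (v + (\<Sum>k\<in>B. (c k)\<^sup>2)) h s)"
    using insert.IH[of "v + (c i)\<^sup>2"] insert.IH[of v] insert.prems by simp
  also have "\<dots> = (\<Sum>B\<in>Pow (insert i K). ennreal (wt \<theta> (insert i K) B) * Gm (v + (\<Sum>k\<in>B. (c k)\<^sup>2)) h s)"
  proof -
    have A: "(\<Sum>B\<in>Pow K. ennreal (wt \<theta> (insert i K) B) * Gm (v + (\<Sum>k\<in>B. (c k)\<^sup>2)) h s)
        = ennreal (1 - \<theta>) * (\<Sum>B\<in>Pow K. ennreal (wt \<theta> K B) * Gm (v + (\<Sum>k\<in>B. (c k)\<^sup>2)) h s)"
      unfolding sum_distrib_left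
      by (rule sum.cong) (use insert th in \<open>auto simp: wt_insert1 ennreal_mult wt_nonneg mult.assoc\<close>)
    have B: "(\<Sum>B\<in>Pow K. ennreal (wt \<theta> (insert i K) (insert i B)) * Gm (v + (\<Sum>k\<in>insert i B. (c k)\<^sup>2)) h s)
        = ennreal \<theta> * (\<Sum>B\<in>Pow K. ennreal (wt \<theta> K B) * Gm (v + (c i)\<^sup>2 + (\<Sum>k\<in>B. (c k)\<^sup>2)) h s)"
      unfolding sum_distrib_left
    proof (rule sum.cong)
      fix B assume "B \<in> Pow K"
      then have "B \<subseteq> K" "i \<notin> B" "finite B" using insert finite_subset by auto
      then show "ennreal (wt \<theta> (insert i K) (insert i B)) * Gm (v + (\<Sum>k\<in>insert i B. (c k)\<^sup>2)) h s
        = ennreal \<theta> * (ennreal (wt \<theta> K B) * Gm (v + (c i)\<^sup>2 + (\<Sum>k\<in>B. (c k)\<^sup>2)) h s)"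
        using insert th by (simp add: wt_insert2 ennreal_mult wt_nonneg mult.assoc add.assoc)
    qed simp
    show ?thesis
      by (subst sum_Pow_insert[OF insert(1,2)]) (simp only: A B add.commute)
  qed
  finally show ?case .
qed


lemma Gm0[simp]: "Gm 0 h s = h s" by (simp add: Gm_def)

lemma XZl:
  assumes "finite K" and [measurable]: "h \<in> borel_measurable borel" and th: "0 \<le> \<theta>" "\<theta> \<le> 1"
  shows "(\<integral>\<^sup>+w. h (\<Sum>k\<in>K. c k * (fst w k + \<eta> * snd w k))
            \<partial>(PiM K (\<lambda>_. BG \<theta>) \<Otimes>\<^sub>M PiM K (\<lambda>_. std_normal_measure)))
     = (\<Sum>B\<in>Pow K. ennreal (wt \<theta> K B) * Gm (\<eta>\<^sup>2 * (\<Sum>k\<in>K. (c k)\<^sup>2) + (\<Sum>k\<in>B. (c k)\<^sup>2)) h 0)"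
proof -
  have sfN: "sigma_finite_measure (PiM K (\<lambda>_. std_normal_measure))"
    by (intro prob_space_imp_sigma_finite prob_space_PiM prob_std)
  have eq: "(\<Sum>k\<in>K. c k * (x k + \<eta> * z k)) = (\<Sum>k\<in>K. c k * x k) + (\<Sum>k\<in>K. (\<eta> * c k) * z k)" for x z
    by (simp add: sum.distrib algebra_simps)
  have m1: "(\<lambda>x. (\<Sum>k\<in>K. c k * x k)) \<in> borel_measurable (PiM K (\<lambda>_. BG \<theta>))"
    using meas_lin[of "BG \<theta>" K K 0 c] by simp
  have m2: "(\<lambda>z. (\<Sum>k\<in>K. (\<eta> * c k) * z k)) \<in> borel_measurable (PiM K (\<lambda>_. std_normal_measure))"
    using meas_lin[of std_normal_measure K K 0 "\<lambda>k. \<eta> * c k"] by simp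
  have m: "(\<lambda>w. h (\<Sum>k\<in>K. c k * (fst w k + \<eta> * snd w k)))
      \<in> borel_measurable (PiM K (\<lambda>_. BG \<theta>) \<Otimes>\<^sub>M PiM K (\<lambda>_. std_normal_measure))"
  proof -
    have "(\<lambda>w. (\<Sum>k\<in>K. c k * fst w k) + (\<Sum>k\<in>K. (\<eta> * c k) * snd w k))
      \<in> borel_measurable (PiM K (\<lambda>_. BG \<theta>) \<Otimes>\<^sub>M PiM K (\<lambda>_. std_normal_measure))"
      by (intro borel_measurable_add measurable_compose[OF measurable_fst m1] measurable_compose[OF measurable_snd m2])
    from measurable_compose[OF this assms(2)] show ?thesis unfolding eq .
  qed
  have "(\<integral>\<^sup>+w. h (\<Sum>k\<in>K. c k * (fst w k + \<eta> * snd w k))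
            \<partial>(PiM K (\<lambda>_. BG \<theta>) \<Otimes>\<^sub>M PiM K (\<lambda>_. std_normal_measure)))
     = (\<integral>\<^sup>+x. (\<integral>\<^sup>+z. h (\<Sum>k\<in>K. c k * (x k + \<eta> * z k)) \<partial>PiM K (\<lambda>_. std_normal_measure)) \<partial>PiM K (\<lambda>_. BG \<theta>))"
    using sigma_finite_measure.nn_integral_fst[OF sfN m] by simp
  also have "\<dots> = (\<integral>\<^sup>+x. Gm (0 + (\<Sum>k\<in>K. (\<eta> * c k)\<^sup>2)) h (0 + (\<Sum>k\<in>K. c k * x k)) \<partial>PiM K (\<lambda>_. BG \<theta>))"
  proof (rule nn_integral_cong)
    fix x
    show "(\<integral>\<^sup>+z. h (\<Sum>k\<in>K. c k * (x k + \<eta> * z k)) \<partial>PiM K (\<lambda>_. std_normal_measure))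
        = Gm (0 + (\<Sum>k\<in>K. (\<eta> * c k)\<^sup>2)) h (0 + (\<Sum>k\<in>K. c k * x k))"
      using Zl[OF assms(1,2), of 0 "\<Sum>k\<in>K. c k * x k" "\<lambda>k. \<eta> * c k"] by (simp add: eq)
  qed
  also have "\<dots> = (\<Sum>B\<in>Pow K. ennreal (wt \<theta> K B) * Gm ((0 + (\<Sum>k\<in>K. (\<eta> * c k)\<^sup>2)) + (\<Sum>k\<in>B. (c k)\<^sup>2)) h 0)"
    by (rule Xl[OF assms]) (simp add: sum_nonneg)
  also have "(\<Sum>k\<in>K. (\<eta> * c k)\<^sup>2) = \<eta>\<^sup>2 * (\<Sum>k\<in>K. (c k)\<^sup>2)"
    by (simp add: power_mult_distrib sum_distrib_left)
  finally show ?thesis by simp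
qed


lemma pos_not_nonpos_Int: "(x::real) > 0 \<Longrightarrow> x \<notin> \<int>\<^sub>\<le>\<^sub>0"
  using nonpos_Ints_nonpos by fastforce

lemma Gamma_half_int: "Gamma (real k + 1/2) = fact (2*k) * sqrt pi / (4^k * fact k)"
proof (induction k)
  case 0
  then show ?case by (simp add: Gamma_one_half_real)
next
  case (Suc k)
  have "Gamma (real (Suc k) + 1/2) = Gamma ((real k + 1/2) + 1)" by (simp add: algebra_simps)
  also have "\<dots> = (real k + 1/2) * Gamma (real k + 1/2)"
    by (rule Gamma_plus1) (rule pos_not_nonpos_Int, simp add: add_nonneg_pos)
  also have "\<dots> = (real k + 1/2) * (fact (2*k) * sqrt pi / (4^k * fact k))" using Suc by simp
  also have "\<dots> = fact (2 * Suc k) * sqrt pi / (4 ^ Suc k * fact (Suc k))"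
  proof -
    define A where "A = (fact (2*k) :: real)"
    define F where "F = (fact k :: real)"
    define P where "P = (4::real)^k"
    have F: "F > 0" unfolding F_def by simp
    have P: "P > 0" unfolding P_def by simp
    have e1: "fact (2 * Suc k) = (real (2*k) + 2) * (real (2*k) + 1) * A"
      unfolding A_def by (simp add: fact_Suc algebra_simps)
    have e2: "fact (Suc k) = (real k + 1) * F" unfolding F_def by (simp add: fact_Suc algebra_simps)
    have e3: "(4::real) ^ Suc k = 4 * P" unfolding P_def by simp
    have "(real (2*k) + 2) * (real (2*k) + 1) * A * sqrt pi / (4 * P * ((real k + 1) * F))
        = ((real (2*k) + 2) * (real (2*k) + 1) / (4 * (real k + 1))) * (A * sqrt pi / (P * F))"
      by (simp add: field_simps)
    also have "(real (2*k) + 2) * (real (2*k) + 1) / (4 * (real k + 1)) = real k + 1/2"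
      by (simp add: field_simps)
    finally show ?thesis unfolding e1 e2 e3 by (simp add: A_def F_def P_def)
  qed
  finally show ?case .
qed

lemma gamma_p_even: "gamma_p (2*k) = fact (2 * k) / (2^k * fact k)"
proof -
  have a: "(real (2*k) + 1) / 2 = real k + 1/2" by simp
  have b: "2 powr (real (2*k) / 2) = 2 ^ k" by (simp add: powr_realpow)
  have "(4::real)^k = 2^k * 2^k" by (simp add: power_mult_distrib[symmetric])
  then show ?thesis unfolding gamma_p_def a b Gamma_half_int by (simp add: field_simps)
qed

lemma gamma_p_odd: "gamma_p (2*k+1) = sqrt (2/pi) * 2^k * fact k"
proof -
  have a: "(real (2*k+1) + 1) / 2 = 1 + real k" by simp
  have b: "2 powr (real (2*k+1) / 2) = 2 ^ k * sqrt 2"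
  proof -
    have "real (2*k+1) / 2 = real k + 1/2" by simp
    then have "2 powr (real (2*k+1) / 2) = 2 powr (real k + 1/2)" by (rule arg_cong)
    also have "\<dots> = 2 powr real k * 2 powr (1/2)" by (rule powr_add)
    also have "\<dots> = 2 ^ k * sqrt 2" by (simp add: powr_realpow powr_half_sqrt)
    finally show ?thesis .
  qed
  show ?thesis unfolding gamma_p_def a b Gamma_fact by (simp add: real_sqrt_divide)
qed

lemma std_abs_moment: "has_bochner_integral lborel (\<lambda>x. std_normal_density x * \<bar>x\<bar>^p) (gamma_p p)"
proof (cases "even p")
  case True
  then obtain k where k: "p = 2*k" by blast
  have "(\<lambda>x. std_normal_density x * \<bar>x\<bar>^p) = (\<lambda>x. std_normal_density x * x^(2*k))"
    using k by (simp add: power_even_abs)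
  then show ?thesis using std_normal_moment_even[of k] k gamma_p_even by simp
next
  case False
  then obtain k where k: "p = 2*k+1" using oddE by blast
  then show ?thesis using std_normal_moment_abs_odd[of k] gamma_p_odd by simp
qed

lemma std_abs_moment_nn: "(\<integral>\<^sup>+x. ennreal (std_normal_density x) * ennreal (\<bar>x\<bar>^p) \<partial>lborel) = ennreal (gamma_p p)"
proof -
  have "(\<integral>\<^sup>+x. ennreal (std_normal_density x) * ennreal (\<bar>x\<bar>^p) \<partial>lborel)
      = (\<integral>\<^sup>+x. ennreal (std_normal_density x * \<bar>x\<bar>^p) \<partial>lborel)"
    by (simp add: ennreal_mult)
  also have "\<dots> = ennreal (integral\<^sup>L lborel (\<lambda>x. std_normal_density x * \<bar>x\<bar>^p))"
    by (rule nn_integral_eq_integral) (use integrable_std_normal_moment_abs in auto)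
  also have "\<dots> = ennreal (gamma_p p)"
    using std_abs_moment[of p] by (simp add: has_bochner_integral_integral_eq)
  finally show ?thesis .
qed

lemma gamma_p_pos: "gamma_p p > 0"
  unfolding gamma_p_def by (intro divide_pos_pos mult_pos_pos Gamma_real_pos) auto

lemma Gm_abs:
  assumes "u \<ge> 0" "p > 0"
  shows "Gm u (\<lambda>t. ennreal (\<bar>t\<bar>^p)) 0 = ennreal (gamma_p p * u powr (real p / 2))"
proof (cases "u = 0")
  case True
  then show ?thesis using assms by simp
next
  case False
  then have u: "u > 0" using assms by simp
  have "Gm u (\<lambda>t. ennreal (\<bar>t\<bar>^p)) 0 = (\<integral>\<^sup>+y. ennreal (normal_density 0 \<bar>sqrt u\<bar> y) * ennreal (\<bar>y\<bar>^p) \<partial>lborel)"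
    using u by (simp add: Gm_def)
  also have "\<dots> = (\<integral>\<^sup>+g. ennreal (std_normal_density g) * ennreal (\<bar>sqrt u * g\<bar>^p) \<partial>lborel)"
    by (rule scale_std[symmetric]) (use u in auto)
  also have "\<dots> = (\<integral>\<^sup>+g. ennreal (sqrt u ^ p) * (ennreal (std_normal_density g) * ennreal (\<bar>g\<bar>^p)) \<partial>lborel)"
    by (rule nn_integral_cong) (use u in \<open>simp add: abs_mult power_mult_distrib ennreal_mult' mult_ac\<close>)
  also have "\<dots> = ennreal (sqrt u ^ p) * ennreal (gamma_p p)"
    by (subst nn_integral_cmult) (auto simp: std_abs_moment_nn)
  also have "sqrt u ^ p = u powr (real p / 2)"
    using u by (simp add: sqrt_def root_powr_inverse powr_realpow[symmetric] powr_powr)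
  finally show ?thesis using gamma_p_pos[of p] by (simp add: ennreal_mult'[symmetric] mult.commute)
qed


lemma aux1: fixes t c :: real shows "(\<Sum>x\<in>A. t * (c * f x + g x)) = t * (c * sum f A + sum g A)"
  by (simp add: sum.distrib sum_distrib_left distrib_left mult.assoc)

lemma aux2: fixes t c d :: real shows "(\<Sum>x\<in>A. t * (c * f x + d * g x + h x)) = t * (c * sum f A + d * sum g A + sum h A)"
  by (simp add: sum.distrib sum_distrib_left distrib_left mult.assoc)

lemma moments:
  assumes "finite K"
  shows "(\<Sum>B\<in>Pow K. wt \<theta> K B) = 1 \<and>
         (\<Sum>B\<in>Pow K. wt \<theta> K B * (\<Sum>k\<in>B. q k)) = \<theta> * (\<Sum>k\<in>K. q k) \<and>
         (\<Sum>B\<in>Pow K. wt \<theta> K B * (\<Sum>k\<in>B. q k)\<^sup>2) = \<theta>\<^sup>2 * (\<Sum>k\<in>K. q k)\<^sup>2 + \<theta> * (1 - \<theta>) * (\<Sum>k\<in>K. (q k)\<^sup>2)"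
  using assms
proof (induction K rule: finite_induct)
  case empty
  then show ?case by (simp add: wt_def)
next
  case (insert i K)
  let ?S = "\<lambda>B. \<Sum>k\<in>B. q k"
  define M0 where "M0 = (\<Sum>B\<in>Pow K. wt \<theta> K B)"
  define M1 where "M1 = (\<Sum>B\<in>Pow K. wt \<theta> K B * ?S B)"
  define M2 where "M2 = (\<Sum>B\<in>Pow K. wt \<theta> K B * (?S B)\<^sup>2)"
  have Sins: "?S (insert i B) = q i + ?S B" if "B \<in> Pow K" for B
  proof -
    have "i \<notin> B" "finite B" using that insert finite_subset by auto
    then show ?thesis by simp
  qed
  have W1: "wt \<theta> (insert i K) B = (1 - \<theta>) * wt \<theta> K B" if "B \<in> Pow K" for B
    using wt_insert1[OF insert(1,2)] that by auto
  have W2: "wt \<theta> (insert i K) (insert i B) = \<theta> * wt \<theta> K B" if "B \<in> Pow K" for B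
    using wt_insert2[OF insert(1,2)] that by auto
  have a: "(\<Sum>B\<in>Pow (insert i K). wt \<theta> (insert i K) B) = (1 - \<theta>) * M0 + \<theta> * M0"
  proof -
    have "(\<Sum>B\<in>Pow K. wt \<theta> (insert i K) B) = (\<Sum>B\<in>Pow K. (1 - \<theta>) * wt \<theta> K B)"
      by (rule sum.cong) (auto simp: W1)
    moreover have "(\<Sum>B\<in>Pow K. wt \<theta> (insert i K) (insert i B)) = (\<Sum>B\<in>Pow K. \<theta> * wt \<theta> K B)"
      by (rule sum.cong) (auto simp: W2)
    ultimately show ?thesis
      unfolding sum_Pow_insert[OF insert(1,2)] M0_def sum_distrib_left by simp
  qed
  have b: "(\<Sum>B\<in>Pow (insert i K). wt \<theta> (insert i K) B * ?S B) = (1 - \<theta>) * M1 + \<theta> * (q i * M0 + M1)"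
  proof -
    have "(\<Sum>B\<in>Pow K. wt \<theta> (insert i K) (insert i B) * ?S (insert i B)) = (\<Sum>B\<in>Pow K. \<theta> * (q i * wt \<theta> K B + wt \<theta> K B * ?S B))"
      by (rule sum.cong) (auto simp: W2 Sins algebra_simps)
    also have "\<dots> = \<theta> * (q i * M0 + M1)"
      unfolding M0_def M1_def by (rule aux1)
    moreover have "(\<Sum>B\<in>Pow K. wt \<theta> (insert i K) B * ?S B) = (1 - \<theta>) * M1"
      unfolding M1_def sum_distrib_left by (rule sum.cong) (auto simp: W1 mult.assoc)
    ultimately show ?thesis
      unfolding sum_Pow_insert[OF insert(1,2)] by simp
  qed
  have c: "(\<Sum>B\<in>Pow (insert i K). wt \<theta> (insert i K) B * (?S B)\<^sup>2) = (1 - \<theta>) * M2 + \<theta> * ((q i)\<^sup>2 * M0 + 2 * q i * M1 + M2)"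
  proof -
    have "(\<Sum>B\<in>Pow K. wt \<theta> (insert i K) (insert i B) * (?S (insert i B))\<^sup>2)
        = (\<Sum>B\<in>Pow K. \<theta> * ((q i)\<^sup>2 * wt \<theta> K B + 2 * q i * (wt \<theta> K B * ?S B) + wt \<theta> K B * (?S B)\<^sup>2))"
      by (rule sum.cong) (auto simp: W2 Sins algebra_simps power2_eq_square)
    also have "\<dots> = \<theta> * ((q i)\<^sup>2 * M0 + 2 * q i * M1 + M2)"
      unfolding M0_def M1_def M2_def by (rule aux2)
    moreover have "(\<Sum>B\<in>Pow K. wt \<theta> (insert i K) B * (?S B)\<^sup>2) = (1 - \<theta>) * M2"
      unfolding M2_def sum_distrib_left by (rule sum.cong) (auto simp: W1 mult.assoc)
    ultimately show ?thesis
      unfolding sum_Pow_insert[OF insert(1,2)] by simp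
  qed
  have IH: "M0 = 1" "M1 = \<theta> * (\<Sum>k\<in>K. q k)" "M2 = \<theta>\<^sup>2 * (\<Sum>k\<in>K. q k)\<^sup>2 + \<theta> * (1 - \<theta>) * (\<Sum>k\<in>K. (q k)\<^sup>2)"
    using insert.IH unfolding M0_def M1_def M2_def by auto
  show ?case
    unfolding a b c IH using insert(1,2) by (simp add: algebra_simps power2_eq_square)
qed

lemma cvx0:
  fixes p x y t :: real
  assumes "p \<ge> 1" "0 \<le> x" "0 \<le> y" "0 \<le> t" "t \<le> 1"
  shows "((1-t)*x + t*y) powr p \<le> (1-t) * x powr p + t * y powr p"
proof -
  have le: "a powr p \<le> a" if "0 \<le> a" "a \<le> 1" for a :: real
  proof (cases "a = 0")
    case False
    then have "a powr p = a * a powr (p - 1)"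
      using that by (simp add: powr_mult_base)
    also have "\<dots> \<le> a * 1"
      using that assms by (intro mult_left_mono powr_le1) auto
    finally show ?thesis by simp
  qed (use assms in simp)
  show ?thesis
  proof (cases "x = 0")
    case True
    have "(t * y) powr p = t powr p * y powr p" using assms by (simp add: powr_mult)
    also have "\<dots> \<le> t * y powr p" using le[of t] assms by (intro mult_right_mono) auto
    finally show ?thesis using True by simp
  next
    case x: False
    show ?thesis
    proof (cases "y = 0")
      case True
      have "((1-t) * x) powr p = (1-t) powr p * x powr p" using assms by (simp add: powr_mult)
      also have "\<dots> \<le> (1-t) * x powr p" using le[of "1-t"] assms by (intro mult_right_mono) auto
      finally show ?thesis using True by simp
    next
      case False
      then show ?thesis
        using convex_onD[OF powr_convex[OF assms(1)], of t x y] assms x by simp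
    qed
  qed
qed

lemma chord_bound:
  fixes \<phi> :: "real \<Rightarrow> real"
  assumes cv: "\<And>x y t. 0 \<le> x \<Longrightarrow> x \<le> 1 \<Longrightarrow> 0 \<le> y \<Longrightarrow> y \<le> 1 \<Longrightarrow> 0 \<le> t \<Longrightarrow> t \<le> 1 \<Longrightarrow>
            \<phi> ((1-t)*x + t*y) \<le> (1-t) * \<phi> x + t * \<phi> y"
  shows "0 \<le> \<phi> 1 + \<phi> 0 - 2 * \<phi> (1/2)"
    and "0 \<le> s \<Longrightarrow> s \<le> 1 \<Longrightarrow> \<phi> s \<le> (1-s) * \<phi> 0 + s * \<phi> 1 - (\<phi> 1 + \<phi> 0 - 2 * \<phi> (1/2)) * (s * (1-s))"
proof -
  show K: "0 \<le> \<phi> 1 + \<phi> 0 - 2 * \<phi> (1/2)"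
    using cv[of 0 1 "1/2"] by simp
  define K where "K = \<phi> 1 + \<phi> 0 - 2 * \<phi> (1/2)"
  have K0: "K \<ge> 0" using K K_def by simp
  assume s: "0 \<le> s" "s \<le> 1"
  show "\<phi> s \<le> (1-s) * \<phi> 0 + s * \<phi> 1 - (\<phi> 1 + \<phi> 0 - 2 * \<phi> (1/2)) * (s * (1-s))"
  proof (cases "s \<le> 1/2")
    case True
    have "\<phi> s \<le> (1 - 2* s) * \<phi> 0 + (2* s) * \<phi> (1/2)"
      using cv[of 0 "1/2" "2* s"] True s by simp
    moreover have "(1-s) * \<phi> 0 + s * \<phi> 1 - K * (s * (1-s)) - ((1 - 2* s) * \<phi> 0 + (2* s) * \<phi> (1/2)) = K * s\<^sup>2"
      unfolding K_def by (simp add: algebra_simps power2_eq_square)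
    moreover have "K * s\<^sup>2 \<ge> 0" using K0 by simp
    ultimately show ?thesis unfolding K_def by linarith
  next
    case False
    have "\<phi> s \<le> (1 - (2* s - 1)) * \<phi> (1/2) + (2* s - 1) * \<phi> 1"
      using cv[of "1/2" 1 "2* s-1"] False s by (simp add: algebra_simps)
    moreover have "(1-s) * \<phi> 0 + s * \<phi> 1 - K * (s * (1-s)) - ((1 - (2* s - 1)) * \<phi> (1/2) + (2* s - 1) * \<phi> 1) = K * (1-s)\<^sup>2"
      unfolding K_def by (simp add: algebra_simps power2_eq_square)
    moreover have "K * (1-s)\<^sup>2 \<ge> 0" using K0 by simp
    ultimately show ?thesis unfolding K_def by linarith
  qed
qed

lemma mix_bound:
  fixes \<phi> :: "real \<Rightarrow> real"
  assumes "finite K" and q: "\<And>k. q k \<ge> 0" "(\<Sum>k\<in>K. q k) = 1" and th: "0 \<le> \<theta>" "\<theta> \<le> 1"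
  and cv: "\<And>x y t. 0 \<le> x \<Longrightarrow> x \<le> 1 \<Longrightarrow> 0 \<le> y \<Longrightarrow> y \<le> 1 \<Longrightarrow> 0 \<le> t \<Longrightarrow> t \<le> 1 \<Longrightarrow>
            \<phi> ((1-t)*x + t*y) \<le> (1-t) * \<phi> x + t * \<phi> y"
  shows "(\<Sum>B\<in>Pow K. wt \<theta> K B * \<phi> (\<Sum>k\<in>B. q k))
      \<le> \<theta> * \<phi> 1 + (1 - \<theta>) * \<phi> 0 - (\<phi> 1 + \<phi> 0 - 2 * \<phi> (1/2)) * \<theta> * (1 - \<theta>) * (1 - (\<Sum>k\<in>K. (q k)\<^sup>2))"
proof -
  define K' where "K' = \<phi> 1 + \<phi> 0 - 2 * \<phi> (1/2)"
  let ?S = "\<lambda>B. \<Sum>k\<in>B. q k"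
  have Sb: "0 \<le> ?S B \<and> ?S B \<le> 1" if "B \<in> Pow K" for B
  proof -
    have "?S B \<le> ?S K" using that assms(1) q(1) by (intro sum_mono2) auto
    then show ?thesis using q by (simp add: sum_nonneg)
  qed
  have "(\<Sum>B\<in>Pow K. wt \<theta> K B * \<phi> (?S B))
     \<le> (\<Sum>B\<in>Pow K. wt \<theta> K B * ((1 - ?S B) * \<phi> 0 + ?S B * \<phi> 1 - K' * (?S B * (1 - ?S B))))"
    unfolding K'_def
    by (rule sum_mono, rule mult_left_mono) (use Sb chord_bound(2)[OF cv] wt_nonneg[OF th] in auto)
  also have "\<dots> = \<phi> 0 * (\<Sum>B\<in>Pow K. wt \<theta> K B) + (\<phi> 1 - \<phi> 0 - K') * (\<Sum>B\<in>Pow K. wt \<theta> K B * ?S B)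
       + K' * (\<Sum>B\<in>Pow K. wt \<theta> K B * (?S B)\<^sup>2)"
  proof -
    have "(\<Sum>B\<in>Pow K. wt \<theta> K B * ((1 - ?S B) * \<phi> 0 + ?S B * \<phi> 1 - K' * (?S B * (1 - ?S B))))
       = (\<Sum>B\<in>Pow K. \<phi> 0 * wt \<theta> K B + (\<phi> 1 - \<phi> 0 - K') * (wt \<theta> K B * ?S B) + K' * (wt \<theta> K B * (?S B)\<^sup>2))"
      by (rule sum.cong) (simp_all add: algebra_simps power2_eq_square)
    then show ?thesis by (simp add: sum.distrib sum_distrib_left[symmetric])
  qed
  also have "\<dots> = \<theta> * \<phi> 1 + (1 - \<theta>) * \<phi> 0 - K' * \<theta> * (1 - \<theta>) * (1 - (\<Sum>k\<in>K. (q k)\<^sup>2))"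
  proof -
    have m: "(\<Sum>B\<in>Pow K. wt \<theta> K B) = 1" "(\<Sum>B\<in>Pow K. wt \<theta> K B * ?S B) = \<theta>"
      "(\<Sum>B\<in>Pow K. wt \<theta> K B * (?S B)\<^sup>2) = \<theta>\<^sup>2 + \<theta> * (1 - \<theta>) * (\<Sum>k\<in>K. (q k)\<^sup>2)"
      using moments[OF assms(1), of \<theta> q] q(2) by auto
    show ?thesis unfolding m by (simp add: algebra_simps power2_eq_square)
  qed
  finally show ?thesis unfolding K'_def .
qed


lemma hall_aux:
  assumes "card I = n" "finite I" "\<forall>i\<in>I. finite (A i)"
    "\<forall>J\<subseteq>I. card J \<le> card (\<Union> (A ` J))"
  shows "\<exists>f. inj_on f I \<and> (\<forall>i\<in>I. f i \<in> A i)"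
  using assms
proof (induction n arbitrary: I A rule: less_induct)
  case (less n)
  show ?case
  proof (cases "I = {}")
    case True
    then show ?thesis by auto
  next
    case Ine: False
    show ?thesis
    proof (cases "\<exists>J. J \<subseteq> I \<and> J \<noteq> {} \<and> J \<noteq> I \<and> card (\<Union> (A ` J)) = card J")
      case True
      then obtain J where J: "J \<subseteq> I" "J \<noteq> {}" "J \<noteq> I" "card (\<Union> (A ` J)) = card J" by blast
      have finJ: "finite J" using J less.prems finite_subset by blast
      have cJ: "card J < n" using J less.prems by (metis psubsetI psubset_card_mono)
      obtain f1 where f1: "inj_on f1 J" "\<forall>i\<in>J. f1 i \<in> A i"
        using less.IH[OF cJ refl finJ, of A] less.prems J by auto
      define NJ where "NJ = \<Union> (A ` J)"
      have finNJ: "finite NJ" unfolding NJ_def using finJ J less.prems by auto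
      define I2 where "I2 = I - J"
      define A2 where "A2 = (\<lambda>k. A k - NJ)"
      have cI2: "card I2 < n" unfolding I2_def using J less.prems finJ
        by (metis Diff_subset card_Diff_subset card_gt_0_iff diff_less finite_subset subset_empty)
      have finI2: "finite I2" unfolding I2_def using less.prems by auto
      have hall2: "\<forall>L\<subseteq>I2. card L \<le> card (\<Union> (A2 ` L))"
      proof (intro allI impI)
        fix L assume L: "L \<subseteq> I2"
        have finL: "finite L" using L finI2 finite_subset by blast
        have disj: "L \<inter> J = {}" using L unfolding I2_def by auto
        have LJI: "L \<union> J \<subseteq> I" using L J unfolding I2_def by auto
        have finNLJ: "finite (\<Union> (A ` (L \<union> J)))" using LJI less.prems finite_subset by blast
        have eq: "\<Union> (A2 ` L) = \<Union> (A ` (L \<union> J)) - NJ" unfolding A2_def NJ_def by auto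
        have sub: "NJ \<subseteq> \<Union> (A ` (L \<union> J))" unfolding NJ_def by auto
        have "card (\<Union> (A2 ` L)) = card (\<Union> (A ` (L \<union> J))) - card NJ"
          unfolding eq using finNJ finNLJ sub by (simp add: card_Diff_subset)
        moreover have "card (L \<union> J) \<le> card (\<Union> (A ` (L \<union> J)))" using less.prems LJI by blast
        moreover have "card (L \<union> J) = card L + card J" using disj finL finJ by (simp add: card_Un_disjoint)
        moreover have "card NJ = card J" using J(4) NJ_def by simp
        ultimately show "card L \<le> card (\<Union> (A2 ` L))" by linarith
      qed
      obtain f2 where f2: "inj_on f2 I2" "\<forall>i\<in>I2. f2 i \<in> A2 i"
        using less.IH[OF cI2 refl finI2, of A2] hall2 less.prems unfolding I2_def A2_def by auto
      define f where "f = (\<lambda>x. if x \<in> J then f1 x else f2 x)"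
      have "inj_on f I"
      proof (rule inj_onI)
        fix x y assume xy: "x \<in> I" "y \<in> I" "f x = f y"
        show "x = y"
        proof (cases "x \<in> J"; cases "y \<in> J")
          assume "x \<in> J" "y \<in> J" then show ?thesis using xy f1 unfolding f_def by (auto dest: inj_onD)
        next
          assume a: "x \<in> J" "y \<notin> J"
          then have "f x \<in> NJ" using f1 unfolding f_def NJ_def by auto
          moreover have "f y \<notin> NJ" using a xy f2 unfolding f_def A2_def I2_def by auto
          ultimately show ?thesis using xy by simp
        next
          assume a: "x \<notin> J" "y \<in> J"
          then have "f y \<in> NJ" using f1 unfolding f_def NJ_def by auto
          moreover have "f x \<notin> NJ"
          proof -
            have "x \<in> I2" using a xy unfolding I2_def by auto
            then have "f2 x \<notin> NJ" using f2 unfolding A2_def by auto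
            then show ?thesis using a unfolding f_def by simp
          qed
          ultimately show ?thesis using xy by simp
        next
          assume "x \<notin> J" "y \<notin> J" then show ?thesis using xy f2 unfolding f_def I2_def by (auto dest: inj_onD)
        qed
      qed
      moreover have "\<forall>i\<in>I. f i \<in> A i" using f1 f2 unfolding f_def I2_def A2_def by auto
      ultimately show ?thesis by blast
    next
      case False
      then have strict: "\<And>J. J \<subseteq> I \<Longrightarrow> J \<noteq> {} \<Longrightarrow> J \<noteq> I \<Longrightarrow> card J + 1 \<le> card (\<Union> (A ` J))"
        using less.prems(4) by (metis Suc_eq_plus1 Suc_leI le_neq_implies_less)
      obtain i where i: "i \<in> I" using Ine by blast
      have "card {i} \<le> card (\<Union> (A ` {i}))" using less.prems(4) i by blast
      then have "A i \<noteq> {}" by auto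
      then obtain a where a: "a \<in> A i" by blast
      define I' where "I' = I - {i}"
      define A' where "A' = (\<lambda>k. A k - {a})"
      have cI': "card I' < n"
      proof -
        have "card I > 0" using i less.prems card_gt_0_iff by blast
        then show ?thesis unfolding I'_def using i less.prems by simp
      qed
      have finI': "finite I'" unfolding I'_def using less.prems by auto
      have hall': "\<forall>J\<subseteq>I'. card J \<le> card (\<Union> (A' ` J))"
      proof (intro allI impI)
        fix J assume J: "J \<subseteq> I'"
        show "card J \<le> card (\<Union> (A' ` J))"
        proof (cases "J = {}")
          case False
          have JI: "J \<subseteq> I" "J \<noteq> I" using J i unfolding I'_def by auto
          have finN: "finite (\<Union> (A ` J))" using JI less.prems finite_subset by blast
          have "\<Union> (A' ` J) = \<Union> (A ` J) - {a}" unfolding A'_def by auto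
          then have "card (\<Union> (A' ` J)) \<ge> card (\<Union> (A ` J)) - 1"
            using finN by (simp add: card_Diff_singleton_if)
          then show ?thesis using strict[OF JI(1) False JI(2)] by linarith
        qed simp
      qed
      obtain f' where f': "inj_on f' I'" "\<forall>j\<in>I'. f' j \<in> A' j"
        using less.IH[OF cI' refl finI', of A'] hall' less.prems unfolding I'_def A'_def by auto
      define f where "f = f'(i := a)"
      have "inj_on f I"
      proof (rule inj_onI)
        fix x y assume xy: "x \<in> I" "y \<in> I" "f x = f y"
        show "x = y"
        proof (cases "x = i"; cases "y = i")
          assume "x \<noteq> i" "y \<noteq> i" then show ?thesis using xy f' unfolding f_def I'_def by (auto dest: inj_onD)
        next
          assume "x = i" "y \<noteq> i" then show ?thesis using xy f' unfolding f_def I'_def A'_def by auto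
        next
          assume "x \<noteq> i" "y = i" then show ?thesis using xy f' unfolding f_def I'_def A'_def by force
        qed simp
      qed
      moreover have "\<forall>j\<in>I. f j \<in> A j" using f' a unfolding f_def I'_def A'_def by auto
      ultimately show ?thesis by blast
    qed
  qed
qed

lemma hall:
  assumes "finite I" "\<forall>i\<in>I. finite (A i)" "\<forall>J\<subseteq>I. card J \<le> card (\<Union> (A ` J))"
  shows "\<exists>f. inj_on f I \<and> (\<forall>i\<in>I. f i \<in> A i)"
  using hall_aux[OF refl assms] .


lemma bv_aux:
  fixes q w :: "'n::finite \<Rightarrow> 'n \<Rightarrow> real"
  assumes "card {(i,k). q i k \<noteq> 0} = m" "\<forall>i k. q i k \<ge> 0" "\<forall>i. (\<Sum>k\<in>UNIV. q i k) = s"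
    "\<forall>k. (\<Sum>i\<in>UNIV. q i k) = s" "\<forall>\<sigma>. bij \<sigma> \<longrightarrow> (\<Sum>i\<in>UNIV. w i (\<sigma> i)) \<le> M"
  shows "(\<Sum>i\<in>UNIV. \<Sum>k\<in>UNIV. q i k * w i k) \<le> s * M"
  using assms
proof (induction m arbitrary: q s rule: less_induct)
  case (less m)
  have s0: "s \<ge> 0" using less.prems(2,3) by (metis sum_nonneg)
  show ?case
  proof (cases "s = 0")
    case True
    have "q i k = 0" for i k
    proof -
      have "(\<Sum>k\<in>UNIV. q i k) = 0" using less.prems(3) True by simp
      then show ?thesis using less.prems(2) by (simp add: sum_nonneg_eq_0_iff)
    qed
    then show ?thesis using True by simp
  next
    case False
    then have spos: "s > 0" using s0 by simp
    define A where "A = (\<lambda>i. {k. q i k > 0})"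
    have hallc: "\<forall>J\<subseteq>UNIV. card J \<le> card (\<Union> (A ` J))"
    proof (intro allI impI)
      fix J :: "'n set"
      define N where "N = \<Union> (A ` J)"
      have "s * card J = (\<Sum>i\<in>J. \<Sum>k\<in>UNIV. q i k)" using less.prems(3) by simp
      also have "\<dots> = (\<Sum>i\<in>J. \<Sum>k\<in>N. q i k)"
      proof (rule sum.cong[OF refl], rule sum.mono_neutral_right)
        fix i assume i: "i \<in> J"
        show "\<forall>k\<in>UNIV - N. q i k = 0"
        proof
          fix k assume "k \<in> UNIV - N"
          then have "\<not> q i k > 0" using i unfolding N_def A_def by auto
          moreover have "q i k \<ge> 0" using less.prems(2) by blast
          ultimately show "q i k = 0" by linarith
        qed
      qed auto
      also have "\<dots> \<le> (\<Sum>i\<in>UNIV. \<Sum>k\<in>N. q i k)"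
        by (rule sum_mono2) (auto intro!: sum_nonneg simp: less.prems(2))
      also have "\<dots> = (\<Sum>k\<in>N. \<Sum>i\<in>UNIV. q i k)" by (rule sum.swap)
      also have "\<dots> = s * card N" using less.prems(4) by simp
      finally have "real (card J) \<le> real (card N)" using spos by simp
      then show "card J \<le> card (\<Union> (A ` J))" unfolding N_def by simp
    qed
    obtain f where f: "inj f" "\<forall>i. f i \<in> A i"
      using hall[of UNIV A] hallc by auto
    have bf: "bij f" using f(1) by (simp add: bij_def finite_UNIV_inj_surj)
    have fpos: "q i (f i) > 0" for i using f(2) unfolding A_def by auto
    define lam where "lam = Min (range (\<lambda>i. q i (f i)))"
    have lam_le: "lam \<le> q i (f i)" for i unfolding lam_def by (rule Min_le) auto
    have "lam \<in> range (\<lambda>i. q i (f i))" unfolding lam_def by (rule Min_in) auto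
    then obtain i0 where i0: "q i0 (f i0) = lam" by auto
    have lpos: "lam > 0" using i0 fpos by metis
    define q' where "q' = (\<lambda>i k. q i k - (if k = f i then lam else 0))"
    have q'nn: "\<forall>i k. q' i k \<ge> 0" unfolding q'_def using lam_le less.prems(2) by auto
    have q'row: "\<forall>i. (\<Sum>k\<in>UNIV. q' i k) = s - lam"
      unfolding q'_def using less.prems(3) by (simp add: sum_subtractf)
    have q'col: "\<forall>k. (\<Sum>i\<in>UNIV. q' i k) = s - lam"
    proof
      fix k
      have "(\<Sum>i\<in>UNIV. (if k = f i then lam else 0)) = (\<Sum>i\<in>UNIV. (if i = inv f k then lam else 0))"
        by (rule sum.cong) (use bf in \<open>auto simp: bij_inv_eq_iff\<close>)
      also have "\<dots> = lam" by simp
      finally show "(\<Sum>i\<in>UNIV. q' i k) = s - lam"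
        unfolding q'_def using less.prems(4) by (simp add: sum_subtractf)
    qed
    have sub: "{(i,k). q' i k \<noteq> 0} \<subset> {(i,k). q i k \<noteq> 0}"
    proof
      show "{(i,k). q' i k \<noteq> 0} \<subseteq> {(i,k). q i k \<noteq> 0}"
      proof
        fix x assume "x \<in> {(i,k). q' i k \<noteq> 0}"
        then obtain i k where x: "x = (i,k)" "q' i k \<noteq> 0" by auto
        have "q i k \<noteq> 0"
        proof (cases "k = f i")
          case True then show ?thesis using fpos[of i] by simp
        next
          case False then show ?thesis using x(2) unfolding q'_def by simp
        qed
        then show "x \<in> {(i,k). q i k \<noteq> 0}" using x by simp
      qed
      have "(i0, f i0) \<in> {(i,k). q i k \<noteq> 0}" using fpos[of i0] by simp
      moreover have "(i0, f i0) \<notin> {(i,k). q' i k \<noteq> 0}" unfolding q'_def using i0 by simp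
      ultimately show "{(i,k). q' i k \<noteq> 0} \<noteq> {(i,k). q i k \<noteq> 0}" by blast
    qed
    have cm: "card {(i,k). q' i k \<noteq> 0} < m"
      using less.prems(1) psubset_card_mono[OF _ sub] by simp
    have IH: "(\<Sum>i\<in>UNIV. \<Sum>k\<in>UNIV. q' i k * w i k) \<le> (s - lam) * M"
      by (rule less.IH[OF cm refl q'nn q'row q'col less.prems(5)])
    have "(\<Sum>i\<in>UNIV. \<Sum>k\<in>UNIV. q i k * w i k)
        = (\<Sum>i\<in>UNIV. (\<Sum>k\<in>UNIV. q' i k * w i k) + lam * w i (f i))"
    proof (rule sum.cong[OF refl])
      fix i
      have "(\<Sum>k\<in>UNIV. q i k * w i k) = (\<Sum>k\<in>UNIV. q' i k * w i k + (if k = f i then lam * w i k else 0))"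
        by (rule sum.cong) (auto simp: q'_def algebra_simps)
      then show "(\<Sum>k\<in>UNIV. q i k * w i k) = (\<Sum>k\<in>UNIV. q' i k * w i k) + lam * w i (f i)"
        by (simp add: sum.distrib)
    qed
    also have "\<dots> = (\<Sum>i\<in>UNIV. \<Sum>k\<in>UNIV. q' i k * w i k) + lam * (\<Sum>i\<in>UNIV. w i (f i))"
      by (simp add: sum.distrib sum_distrib_left)
    also have "\<dots> \<le> (s - lam) * M + lam * M"
      using IH less.prems(5) bf lpos by (intro add_mono mult_left_mono) auto
    finally show ?thesis by (simp add: algebra_simps)
  qed
qed

lemma perm_exists:
  fixes Q :: "real^'n::finite^'n"
  assumes "orthogonal_matrix Q"
  shows "\<exists>\<sigma>. bij \<sigma> \<and> (\<Sum>i\<in>UNIV. \<Sum>k\<in>UNIV. (Q $ i $ k)^4) \<le> (\<Sum>i\<in>UNIV. (Q $ i $ \<sigma> i)\<^sup>2)"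
proof -
  define q where "q = (\<lambda>i k. (Q $ i $ k)\<^sup>2)"
  have row: "\<forall>i. (\<Sum>k\<in>UNIV. q i k) = 1"
  proof
    fix i
    have "(Q ** transpose Q) $ i $ i = 1" using assms unfolding orthogonal_matrix_def by (simp add: mat_def)
    moreover have "(Q ** transpose Q) $ i $ i = (\<Sum>k\<in>UNIV. Q$i$k * Q$i$k)"
      by (simp add: matrix_matrix_mult_def transpose_def)
    ultimately show "(\<Sum>k\<in>UNIV. q i k) = 1"
      unfolding q_def power2_eq_square by simp
  qed
  have col: "\<forall>k. (\<Sum>i\<in>UNIV. q i k) = 1"
  proof
    fix k
    have "(transpose Q ** Q) $ k $ k = 1" using assms unfolding orthogonal_matrix_def by (simp add: mat_def)
    moreover have "(transpose Q ** Q) $ k $ k = (\<Sum>i\<in>UNIV. Q$i$k * Q$i$k)"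
      by (simp add: matrix_matrix_mult_def transpose_def)
    ultimately show "(\<Sum>i\<in>UNIV. q i k) = 1"
      unfolding q_def power2_eq_square by simp
  qed
  define S where "S = {\<sigma>::'n \<Rightarrow> 'n. bij \<sigma>}"
  define F where "F = (\<lambda>\<sigma>. \<Sum>i\<in>UNIV. q i (\<sigma> i))"
  have finS: "finite S" unfolding S_def by simp
  have neS: "S \<noteq> {}" unfolding S_def using bij_id by blast
  define M where "M = Max (F ` S)"
  have "M \<in> F ` S" unfolding M_def using Max_in[of "F ` S"] finS neS by blast
  then obtain \<sigma>0 where s0: "\<sigma>0 \<in> S" "F \<sigma>0 = M" by blast
  have Mge: "\<forall>\<sigma>. bij \<sigma> \<longrightarrow> (\<Sum>i\<in>UNIV. q i (\<sigma> i)) \<le> M"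
  proof (intro allI impI)
    fix \<sigma> :: "'n \<Rightarrow> 'n" assume "bij \<sigma>"
    then have "\<sigma> \<in> S" by (simp add: S_def)
    then have "F \<sigma> \<le> M" unfolding M_def using finS by (intro Max_ge) auto
    then show "(\<Sum>i\<in>UNIV. q i (\<sigma> i)) \<le> M" by (simp add: F_def)
  qed
  have "(\<Sum>i\<in>UNIV. \<Sum>k\<in>UNIV. q i k * q i k) \<le> 1 * M"
    by (rule bv_aux[OF refl _ row col Mge]) (simp add: q_def)
  moreover have "(\<Sum>i\<in>UNIV. \<Sum>k\<in>UNIV. (Q $ i $ k)^4) = (\<Sum>i\<in>UNIV. \<Sum>k\<in>UNIV. q i k * q i k)"
  proof -
    have p4: "x^4 = x\<^sup>2 * x\<^sup>2" for x :: real by algebra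
    show ?thesis unfolding q_def by (simp only: p4)
  qed
  ultimately have "(\<Sum>i\<in>UNIV. \<Sum>k\<in>UNIV. (Q $ i $ k)^4) \<le> F \<sigma>0" using s0(2) by simp
  moreover have "bij \<sigma>0" using s0(1) by (simp add: S_def)
  ultimately show ?thesis unfolding F_def q_def by blast
qed


definition phi :: "real \<Rightarrow> nat \<Rightarrow> real \<Rightarrow> real" where
  "phi \<eta> p s = (\<eta>\<^sup>2 + s) powr (real p / 2)"

lemma phi_cvx:
  assumes "p > 2" "0 \<le> x" "0 \<le> y" "0 \<le> t" "t \<le> 1"
  shows "phi \<eta> p ((1-t)*x + t*y) \<le> (1-t) * phi \<eta> p x + t * phi \<eta> p y"
proof -
  have "phi \<eta> p ((1-t)*x + t*y) = ((1-t)*(\<eta>\<^sup>2 + x) + t*(\<eta>\<^sup>2 + y)) powr (real p / 2)"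
    unfolding phi_def by (simp add: algebra_simps)
  also have "\<dots> \<le> (1-t) * (\<eta>\<^sup>2 + x) powr (real p / 2) + t * (\<eta>\<^sup>2 + y) powr (real p / 2)"
    by (rule cvx0) (use assms in auto)
  finally show ?thesis unfolding phi_def .
qed

lemma sum_pairs: "(\<Sum>kk\<in>(UNIV::('a::finite \<times> 'b::finite) set). g kk) = (\<Sum>k\<in>UNIV. \<Sum>j\<in>UNIV. g (k, j))"
  by (simp add: sum.cartesian_product)

lemma entry_bound:
  fixes Q :: "real^'n::finite^'n" and j :: "'r::finite"
  assumes p: "p > 2" and th: "0 \<le> \<theta>" "\<theta> \<le> 1" and eta: "\<eta> \<ge> 0" and Q: "orthogonal_matrix Q"
  shows "(\<integral>\<^sup>+w. ennreal (\<bar>(Q ** Y_mat \<eta> (fst w) (snd w)) $ i $ j\<bar> ^ p)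
            \<partial>(XZ_law \<theta> :: (('n \<times> 'r \<Rightarrow> real) \<times> ('n \<times> 'r \<Rightarrow> real)) measure))
      \<le> ennreal (gamma_p p * (\<theta> * phi \<eta> p 1 + (1 - \<theta>) * phi \<eta> p 0
           - (phi \<eta> p 1 + phi \<eta> p 0 - 2 * phi \<eta> p (1/2)) * \<theta> * (1 - \<theta>) * (1 - (\<Sum>k\<in>UNIV. (Q $ i $ k)^4))))"
    (is "?L \<le> ennreal (gamma_p p * ?B)")
proof -
  define c where "c = (\<lambda>kk::'n \<times> 'r. if snd kk = j then Q $ i $ fst kk else 0)"
  have ent: "(Q ** Y_mat \<eta> x z) $ i $ j = (\<Sum>kk\<in>UNIV. c kk * (x kk + \<eta> * z kk))" for x z
  proof -
    have "(Q ** Y_mat \<eta> x z) $ i $ j = (\<Sum>k\<in>UNIV. Q $ i $ k * (x (k, j) + \<eta> * z (k, j)))"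
      by (simp add: matrix_matrix_mult_def Y_mat_def)
    also have "\<dots> = (\<Sum>k\<in>UNIV. \<Sum>j'\<in>UNIV. c (k, j') * (x (k, j') + \<eta> * z (k, j')))"
    proof (rule sum.cong[OF refl])
      fix k
      have "(\<Sum>j'\<in>UNIV. c (k, j') * (x (k, j') + \<eta> * z (k, j')))
          = (\<Sum>j'\<in>UNIV. if j' = j then Q $ i $ k * (x (k, j') + \<eta> * z (k, j')) else 0)"
        unfolding c_def by (rule sum.cong) auto
      then show "Q $ i $ k * (x (k, j) + \<eta> * z (k, j)) = (\<Sum>j'\<in>UNIV. c (k, j') * (x (k, j') + \<eta> * z (k, j')))"
        by simp
    qed
    finally show ?thesis by (simp add: sum_pairs)
  qed
  have row: "(\<Sum>k\<in>UNIV. (Q $ i $ k)\<^sup>2) = 1"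
  proof -
    have "(Q ** transpose Q) $ i $ i = 1" using Q unfolding orthogonal_matrix_def by (simp add: mat_def)
    moreover have "(Q ** transpose Q) $ i $ i = (\<Sum>k\<in>UNIV. Q$i$k * Q$i$k)"
      by (simp add: matrix_matrix_mult_def transpose_def)
    ultimately show ?thesis unfolding power2_eq_square by simp
  qed
  have cF: "(\<Sum>kk\<in>UNIV. F (c kk)) = (\<Sum>k\<in>UNIV. F (Q $ i $ k))" if F0: "F 0 = 0" for F :: "real \<Rightarrow> real"
    unfolding sum_pairs
  proof (rule sum.cong[OF refl])
    fix k
    have "(\<Sum>j'\<in>UNIV. F (c (k, j'))) = (\<Sum>j'\<in>UNIV. if j' = j then F (Q $ i $ k) else 0)"
      unfolding c_def by (rule sum.cong) (auto simp: F0)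
    then show "(\<Sum>j'\<in>UNIV. F (c (k, j'))) = F (Q $ i $ k)" by simp
  qed
  have c2: "(\<Sum>kk\<in>UNIV. (c kk)\<^sup>2) = 1"
    using cF[of "\<lambda>x. x\<^sup>2"] row by simp
  have c4: "(\<Sum>kk\<in>UNIV. ((c kk)\<^sup>2)\<^sup>2) = (\<Sum>k\<in>UNIV. (Q $ i $ k)^4)"
  proof -
    have p4: "(x\<^sup>2)\<^sup>2 = x^4" for x :: real by algebra
    show ?thesis using cF[of "\<lambda>x. (x\<^sup>2)\<^sup>2"] by (simp only: p4) simp
  qed
  have hm: "(\<lambda>t::real. ennreal (\<bar>t\<bar> ^ p)) \<in> borel_measurable borel" by measurable
  have "?L = (\<integral>\<^sup>+w. ennreal (\<bar>\<Sum>kk\<in>UNIV. c kk * (fst w kk + \<eta> * snd w kk)\<bar> ^ p)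
            \<partial>(PiM UNIV (\<lambda>_. BG \<theta>) \<Otimes>\<^sub>M PiM UNIV (\<lambda>_. std_normal_measure)))"
    unfolding XZ_law_def ent ..
  also have "\<dots> = (\<Sum>B\<in>Pow UNIV. ennreal (wt \<theta> UNIV B) *
        Gm (\<eta>\<^sup>2 * (\<Sum>k\<in>UNIV. (c k)\<^sup>2) + (\<Sum>k\<in>B. (c k)\<^sup>2)) (\<lambda>t. ennreal (\<bar>t\<bar> ^ p)) 0)"
    by (rule XZl[OF _ hm th]) simp
  also have "\<dots> = (\<Sum>B\<in>Pow UNIV. ennreal (wt \<theta> UNIV B * (gamma_p p * phi \<eta> p (\<Sum>k\<in>B. (c k)\<^sup>2))))"
  proof (rule sum.cong[OF refl])
    fix B :: "('n \<times> 'r) set"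
    have "Gm (\<eta>\<^sup>2 * (\<Sum>k\<in>UNIV. (c k)\<^sup>2) + (\<Sum>k\<in>B. (c k)\<^sup>2)) (\<lambda>t. ennreal (\<bar>t\<bar> ^ p)) 0
        = ennreal (gamma_p p * phi \<eta> p (\<Sum>k\<in>B. (c k)\<^sup>2))"
    proof -
      have "0 \<le> \<eta>\<^sup>2 + (\<Sum>k\<in>B. (c k)\<^sup>2)" by (intro add_nonneg_nonneg sum_nonneg) auto
      then show ?thesis unfolding c2 phi_def using p by (subst Gm_abs) auto
    qed
    then show "ennreal (wt \<theta> UNIV B) * Gm (\<eta>\<^sup>2 * (\<Sum>k\<in>UNIV. (c k)\<^sup>2) + (\<Sum>k\<in>B. (c k)\<^sup>2)) (\<lambda>t. ennreal (\<bar>t\<bar> ^ p)) 0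
        = ennreal (wt \<theta> UNIV B * (gamma_p p * phi \<eta> p (\<Sum>k\<in>B. (c k)\<^sup>2)))"
      using th wt_nonneg[OF th, of UNIV B] by (simp add: ennreal_mult')
  qed
  also have "\<dots> = ennreal (\<Sum>B\<in>Pow UNIV. wt \<theta> UNIV B * (gamma_p p * phi \<eta> p (\<Sum>k\<in>B. (c k)\<^sup>2)))"
    by (rule sum_ennreal) (use th gamma_p_pos[of p] in \<open>auto intro!: mult_nonneg_nonneg wt_nonneg simp: phi_def\<close>)
  also have "\<dots> = ennreal (gamma_p p * (\<Sum>B\<in>Pow UNIV. wt \<theta> UNIV B * phi \<eta> p (\<Sum>k\<in>B. (c k)\<^sup>2)))"
    by (simp add: sum_distrib_left mult_ac)
  also have "\<dots> \<le> ennreal (gamma_p p * ?B)"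
  proof (rule ennreal_leI, rule mult_left_mono)
    show "(\<Sum>B\<in>Pow UNIV. wt \<theta> UNIV B * phi \<eta> p (\<Sum>k\<in>B. (c k)\<^sup>2)) \<le> ?B"
      using mix_bound[of "UNIV::('n\<times>'r) set" "\<lambda>kk. (c kk)\<^sup>2" \<theta> "phi \<eta> p"] th c2 c4 phi_cvx[OF p]
      by simp
  qed (use gamma_p_pos[of p] in simp)
  finally show ?thesis .
qed


lemma fst_comp_meas:
  "(\<lambda>w. fst w kk) \<in> borel_measurable (XZ_law \<theta> :: (('n::finite \<times> 'r::finite \<Rightarrow> real) \<times> ('n \<times> 'r \<Rightarrow> real)) measure)"
proof -
  have "(\<lambda>x. x kk) \<in> borel_measurable (PiM UNIV (\<lambda>_::'n\<times>'r. BG \<theta>))"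
    using measurable_component_singleton[of kk UNIV "\<lambda>_. BG \<theta>"] measurable_cong_sets[OF refl sets_BG]
    by blast
  then show ?thesis unfolding XZ_law_def by (rule measurable_compose[OF measurable_fst])
qed

lemma snd_comp_meas:
  "(\<lambda>w. snd w kk) \<in> borel_measurable (XZ_law \<theta> :: (('n::finite \<times> 'r::finite \<Rightarrow> real) \<times> ('n \<times> 'r \<Rightarrow> real)) measure)"
proof -
  have "(\<lambda>x. x kk) \<in> borel_measurable (PiM UNIV (\<lambda>_::'n\<times>'r. std_normal_measure))"
    using measurable_component_singleton[of kk UNIV "\<lambda>_. std_normal_measure"] measurable_cong_sets[OF refl sets_std]
    by blast
  then show ?thesis unfolding XZ_law_def by (rule measurable_compose[OF measurable_snd])
qed

lemma entry_meas:
  fixes Q :: "real^'n::finite^'n"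
  shows "(\<lambda>w. \<bar>(Q ** Y_mat \<eta> (fst w) (snd w)) $ i $ (j::'r::finite)\<bar> ^ p)
     \<in> borel_measurable (XZ_law \<theta> :: (('n \<times> 'r \<Rightarrow> real) \<times> ('n \<times> 'r \<Rightarrow> real)) measure)"
proof -
  have "(\<lambda>w. (Q ** Y_mat \<eta> (fst w) (snd w)) $ i $ j) = (\<lambda>w. \<Sum>k\<in>UNIV. Q $ i $ k * (fst w (k, j) + \<eta> * snd w (k, j)))"
    by (simp add: matrix_matrix_mult_def Y_mat_def)
  moreover have "(\<lambda>w. \<Sum>k\<in>UNIV. Q $ i $ k * (fst w (k, j) + \<eta> * snd w (k, j)))
     \<in> borel_measurable (XZ_law \<theta> :: (('n \<times> 'r \<Rightarrow> real) \<times> ('n \<times> 'r \<Rightarrow> real)) measure)"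
    by (intro borel_measurable_sum borel_measurable_times borel_measurable_add borel_measurable_const
        fst_comp_meas snd_comp_meas)
  ultimately show ?thesis by (intro borel_measurable_power borel_measurable_abs) simp
qed

lemma phi0: "\<eta> \<ge> 0 \<Longrightarrow> p > 0 \<Longrightarrow> phi \<eta> p 0 = \<eta> ^ p"
proof (cases "\<eta> = 0")
  case False
  assume "\<eta> \<ge> 0" "p > 0"
  then have e: "\<eta> > 0" using False by simp
  have "phi \<eta> p 0 = (\<eta> powr 2) powr (real p / 2)" unfolding phi_def using e by (simp add: powr_realpow)
  also have "\<dots> = \<eta> powr real p" by (simp add: powr_powr)
  also have "\<dots> = \<eta> ^ p" using e by (simp add: powr_realpow)
  finally show ?thesis .
qed (simp add: phi_def)

lemma rowP_lemma:
  fixes Q P :: "real^'n::finite^'n"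
  assumes row: "(\<Sum>k\<in>UNIV. (Q $ i $ k)\<^sup>2) = 1"
    and Pij: "\<And>j. P $ i $ j = (if j = \<sigma> i then sg i else 0)"
    and sg: "sg i = (if Q $ i $ \<sigma> i \<ge> 0 then 1 else -1)"
  shows "(\<Sum>j\<in>UNIV. ((Q - P) $ i $ j)\<^sup>2) = 2 - 2 * \<bar>Q $ i $ \<sigma> i\<bar>"
proof -
  define x where "x = Q $ i $ \<sigma> i"
  have key: "(x - sg i)\<^sup>2 = x\<^sup>2 + (1 - 2 * \<bar>x\<bar>)"
  proof (cases "x \<ge> 0")
    case True
    then have "sg i = 1" "\<bar>x\<bar> = x" using sg unfolding x_def by auto
    then show ?thesis unfolding power2_eq_square by (simp only:) (simp add: algebra_simps)
  next
    case False
    then have "sg i = -1" "\<bar>x\<bar> = - x" using sg unfolding x_def by auto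
    then show ?thesis unfolding power2_eq_square by (simp only:) (simp add: algebra_simps)
  qed
  have pt: "((Q - P) $ i $ j)\<^sup>2 = (Q $ i $ j)\<^sup>2 + (if j = \<sigma> i then 1 - 2 * \<bar>x\<bar> else 0)" for j
  proof (cases "j = \<sigma> i")
    case True
    have "(Q - P) $ i $ j = x - sg i" unfolding x_def True using Pij[of "\<sigma> i"] by simp
    then show ?thesis using key True unfolding x_def by simp
  next
    case False
    have "(Q - P) $ i $ j = Q $ i $ j" using Pij[of j] False by simp
    then show ?thesis using False by simp
  qed
  have "(\<Sum>j\<in>UNIV. ((Q - P) $ i $ j)\<^sup>2) = (\<Sum>j\<in>UNIV. (Q $ i $ j)\<^sup>2) + (\<Sum>j\<in>UNIV. (if j = \<sigma> i then 1 - 2 * \<bar>x\<bar> else 0))"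
    unfolding pt by (rule sum.distrib)
  also have "\<dots> = 2 - 2 * \<bar>x\<bar>" using row by simp
  finally show ?thesis unfolding x_def .
qed

theorem mainTheorem12:
  fixes p :: nat and \<theta> \<eta> :: real and Q :: "real^'n::finite^'n"
    and rdummy :: "'r::finite itself"
  assumes "p > 2" and "0 < \<theta>" and "\<theta> < 1" and "\<eta> \<ge> 0"
    and "orthogonal_matrix Q"
  shows "\<exists>P. signed_perm_matrix P \<and>
    \<theta> * (1 + \<eta>\<^sup>2) powr (real p / 2) + (1 - \<theta>) * \<eta> ^ p
      - (1 / (real CARD('n) * real CARD('r) * gamma_p p)) *
        (\<integral>w. entry_pnorm_pow p (Q ** Y_mat \<eta> (fst w) (snd w))
           \<partial>(XZ_law \<theta> :: (('n \<times> 'r \<Rightarrow> real) \<times> ('n \<times> 'r \<Rightarrow> real)) measure))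
    \<ge> \<theta> * (1 - \<theta>) / (2 * real CARD('n) * C_eta_p \<eta> p) * (frob_norm (Q - P))\<^sup>2"
proof -
  note p = assms(1) and eta = assms(4) and Q = assms(5)
  have th: "0 \<le> \<theta>" "\<theta> \<le> 1" using assms(2,3) by auto
  define n where "n = real CARD('n)"
  define r where "r = real CARD('r)"
  define \<gamma> where "\<gamma> = gamma_p p"
  define \<phi>1 where "\<phi>1 = phi \<eta> p 1"
  define \<phi>0 where "\<phi>0 = phi \<eta> p 0"
  define \<phi>h where "\<phi>h = phi \<eta> p (1/2)"
  define \<kappa> where "\<kappa> = \<phi>1 + \<phi>0 - 2 * \<phi>h"
  define R where "R = (\<lambda>i. \<Sum>k\<in>UNIV. (Q $ i $ k)^4)"
  define Bd where "Bd = (\<lambda>i. \<theta> * \<phi>1 + (1 - \<theta>) * \<phi>0 - \<kappa> * \<theta> * (1 - \<theta>) * (1 - R i))"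
  define T where "T = \<theta> * \<phi>1 + (1 - \<theta>) * \<phi>0"
  have npos: "n > 0" and rpos: "r > 0" unfolding n_def r_def by simp_all
  have gpos: "\<gamma> > 0" unfolding \<gamma>_def by (rule gamma_p_pos)
  have kap: "\<kappa> \<ge> 0" unfolding \<kappa>_def \<phi>1_def \<phi>0_def \<phi>h_def
    by (rule chord_bound(1)) (use phi_cvx[OF p] in auto)
  have phinn: "phi \<eta> p s \<ge> 0" for s unfolding phi_def by simp
  have e1: "\<phi>1 = (1 + \<eta>\<^sup>2) powr (real p / 2)" unfolding \<phi>1_def phi_def by (simp add: add.commute)
  have e0: "\<phi>0 = \<eta> ^ p" unfolding \<phi>0_def using phi0[OF eta] p by simp
  have eC: "C_eta_p \<eta> p = inverse \<kappa>"
    unfolding C_eta_p_def \<kappa>_def \<phi>1_def \<phi>0_def \<phi>h_def using phi0[OF eta] p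
    by (simp add: phi_def add.commute)
  have row: "(\<Sum>k\<in>UNIV. (Q $ i $ k)\<^sup>2) = 1" for i
  proof -
    have "(Q ** transpose Q) $ i $ i = 1" using Q unfolding orthogonal_matrix_def by (simp add: mat_def)
    moreover have "(Q ** transpose Q) $ i $ i = (\<Sum>k\<in>UNIV. Q$i$k * Q$i$k)"
      by (simp add: matrix_matrix_mult_def transpose_def)
    ultimately show ?thesis unfolding power2_eq_square by simp
  qed
  have Rnn: "R i \<ge> 0" for i unfolding R_def by (intro sum_nonneg) auto
  have Bdnn: "Bd i \<ge> 0" for i
  proof -
    have "\<kappa> * \<theta> * (1 - \<theta>) * R i \<ge> 0" using kap th Rnn by simp
    moreover have "\<theta>\<^sup>2 * \<phi>1 + (1-\<theta>)\<^sup>2 * \<phi>0 + 2 * \<theta> * (1-\<theta>) * \<phi>h \<ge> 0"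
      unfolding \<phi>1_def \<phi>0_def \<phi>h_def using th phinn by (intro add_nonneg_nonneg mult_nonneg_nonneg) auto
    ultimately show ?thesis unfolding Bd_def \<kappa>_def by (simp add: algebra_simps power2_eq_square)
  qed
  let ?M = "XZ_law \<theta> :: (('n \<times> 'r \<Rightarrow> real) \<times> ('n \<times> 'r \<Rightarrow> real)) measure"
  let ?g = "\<lambda>i j w. \<bar>(Q ** Y_mat \<eta> (fst w) (snd w)) $ i $ (j::'r)\<bar> ^ p"
  define I where "I = (\<integral>w. entry_pnorm_pow p (Q ** Y_mat \<eta> (fst w) (snd w)) \<partial>?M)"
  have fe: "entry_pnorm_pow p (Q ** Y_mat \<eta> (fst w) (snd w)) = (\<Sum>i\<in>UNIV. \<Sum>j\<in>UNIV. ?g i j w)" for w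
    unfolding entry_pnorm_pow_def ..
  have gm: "?g i j \<in> borel_measurable ?M" for i j by (rule entry_meas)
  have fm: "(\<lambda>w. entry_pnorm_pow p (Q ** Y_mat \<eta> (fst w) (snd w))) \<in> borel_measurable ?M"
    unfolding fe by (intro borel_measurable_sum gm)
  have nnI: "(\<integral>\<^sup>+w. ennreal (entry_pnorm_pow p (Q ** Y_mat \<eta> (fst w) (snd w))) \<partial>?M)
      \<le> ennreal (\<Sum>i\<in>UNIV. \<Sum>j\<in>(UNIV::'r set). \<gamma> * Bd i)"
  proof -
    have "(\<integral>\<^sup>+w. ennreal (entry_pnorm_pow p (Q ** Y_mat \<eta> (fst w) (snd w))) \<partial>?M)
      = (\<integral>\<^sup>+w. (\<Sum>i\<in>UNIV. \<Sum>j\<in>UNIV. ennreal (?g i j w)) \<partial>?M)"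
      unfolding fe by (simp add: sum_nonneg)
    also have "\<dots> = (\<Sum>i\<in>UNIV. \<Sum>j\<in>UNIV. \<integral>\<^sup>+w. ennreal (?g i j w) \<partial>?M)"
    proof -
      have gme: "(\<lambda>w. ennreal (?g i j w)) \<in> borel_measurable ?M" for i j
        using gm[of i j] by measurable
      have "(\<integral>\<^sup>+w. (\<Sum>i\<in>UNIV. \<Sum>j\<in>UNIV. ennreal (?g i j w)) \<partial>?M)
          = (\<Sum>i\<in>UNIV. \<integral>\<^sup>+w. (\<Sum>j\<in>UNIV. ennreal (?g i j w)) \<partial>?M)"
        by (rule nn_integral_sum) (intro borel_measurable_sum gme)
      also have "\<dots> = (\<Sum>i\<in>UNIV. \<Sum>j\<in>UNIV. \<integral>\<^sup>+w. ennreal (?g i j w) \<partial>?M)"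
        by (intro sum.cong refl nn_integral_sum gme)
      finally show ?thesis .
    qed
    also have "\<dots> \<le> (\<Sum>i\<in>UNIV. \<Sum>j\<in>(UNIV::'r set). ennreal (\<gamma> * Bd i))"
      unfolding \<gamma>_def Bd_def \<kappa>_def \<phi>1_def \<phi>0_def \<phi>h_def R_def
      by (intro sum_mono entry_bound[OF p th eta Q])
    also have "\<dots> = ennreal (\<Sum>i\<in>UNIV. \<Sum>j\<in>(UNIV::'r set). \<gamma> * Bd i)"
    proof -
      have nn: "0 \<le> \<gamma> * Bd i" for i using gpos Bdnn[of i] by simp
      have "(\<Sum>j\<in>(UNIV::'r set). ennreal (\<gamma> * Bd i)) = ennreal (\<Sum>j\<in>(UNIV::'r set). \<gamma> * Bd i)" for i
        by (rule sum_ennreal) (rule nn)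
      then have "(\<Sum>i\<in>UNIV. \<Sum>j\<in>(UNIV::'r set). ennreal (\<gamma> * Bd i))
          = (\<Sum>i\<in>UNIV. ennreal (\<Sum>j\<in>(UNIV::'r set). \<gamma> * Bd i))" by (simp only:)
      also have "\<dots> = ennreal (\<Sum>i\<in>UNIV. \<Sum>j\<in>(UNIV::'r set). \<gamma> * Bd i)"
        by (rule sum_ennreal) (intro sum_nonneg nn)
      finally show ?thesis .
    qed
    finally show ?thesis .
  qed
  have "I = enn2real (\<integral>\<^sup>+w. ennreal (entry_pnorm_pow p (Q ** Y_mat \<eta> (fst w) (snd w))) \<partial>?M)"
    unfolding I_def by (rule integral_eq_nn_integral[OF fm]) (simp add: fe sum_nonneg)
  also have "\<dots> \<le> enn2real (ennreal (\<Sum>i\<in>UNIV. \<Sum>j\<in>(UNIV::'r set). \<gamma> * Bd i))"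
    by (rule enn2real_mono[OF nnI]) simp
  also have "\<dots> = (\<Sum>i\<in>UNIV. \<Sum>j\<in>(UNIV::'r set). \<gamma> * Bd i)"
    using gpos Bdnn by (simp add: sum_nonneg)
  also have "\<dots> = r * \<gamma> * (\<Sum>i\<in>UNIV. Bd i)"
    unfolding r_def by (simp add: sum_distrib_left sum_distrib_right mult_ac)
  finally have Ile: "I \<le> r * \<gamma> * (\<Sum>i\<in>UNIV. Bd i)" .
  have sumBd: "(\<Sum>i\<in>UNIV. Bd i) = n * T - \<kappa> * \<theta> * (1 - \<theta>) * (n - (\<Sum>i\<in>UNIV. R i))"
  proof -
    define c1 where "c1 = T - \<kappa> * \<theta> * (1 - \<theta>)"
    define c2 where "c2 = \<kappa> * \<theta> * (1 - \<theta>)"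
    have "Bd i = c1 + c2 * R i" for i unfolding Bd_def T_def c1_def c2_def by (simp add: algebra_simps)
    then have "(\<Sum>i\<in>UNIV. Bd i) = (\<Sum>i\<in>UNIV. c1 + c2 * R i)" by simp
    also have "\<dots> = n * c1 + c2 * (\<Sum>i\<in>UNIV. R i)" unfolding n_def by (simp add: sum.distrib sum_distrib_left)
    finally show ?thesis unfolding c1_def c2_def by (simp add: algebra_simps)
  qed
  have LHS: "T - (1 / (n * r * \<gamma>)) * I \<ge> \<kappa> * \<theta> * (1 - \<theta>) * (n - (\<Sum>i\<in>UNIV. R i)) / n"
  proof -
    have "(1 / (n * r * \<gamma>)) * I \<le> (1 / (n * r * \<gamma>)) * (r * \<gamma> * (\<Sum>i\<in>UNIV. Bd i))"
      using Ile npos rpos gpos by (intro mult_left_mono) auto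
    also have "\<dots> = (\<Sum>i\<in>UNIV. Bd i) / n" using npos rpos gpos by (simp add: field_simps)
    finally have "T - (1 / (n * r * \<gamma>)) * I \<ge> T - (\<Sum>i\<in>UNIV. Bd i) / n" by simp
    moreover have "T - (\<Sum>i\<in>UNIV. Bd i) / n = \<kappa> * \<theta> * (1 - \<theta>) * (n - (\<Sum>i\<in>UNIV. R i)) / n"
      unfolding sumBd using npos by (simp add: field_simps)
    ultimately show ?thesis by simp
  qed
  obtain \<sigma> where \<sigma>: "bij \<sigma>" "(\<Sum>i\<in>UNIV. R i) \<le> (\<Sum>i\<in>UNIV. (Q $ i $ \<sigma> i)\<^sup>2)"
    using perm_exists[OF Q] unfolding R_def by blast
  define sg where "sg = (\<lambda>i. if Q $ i $ \<sigma> i \<ge> 0 then 1 else (-1::real))"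
  define P :: "real^'n^'n" where "P = (\<chi> i j. if j = \<sigma> i then sg i else 0)"
  have sP: "signed_perm_matrix P"
    unfolding signed_perm_matrix_def P_def sg_def using \<sigma>(1) by (intro exI[of _ \<sigma>] exI[of _ sg]) (auto simp: sg_def)
  have absle: "(Q $ i $ k)\<^sup>2 \<le> \<bar>Q $ i $ k\<bar>" for i k
  proof -
    have "(Q $ i $ k)\<^sup>2 \<le> (\<Sum>k\<in>UNIV. (Q $ i $ k)\<^sup>2)" by (rule member_le_sum) auto
    then have "\<bar>Q $ i $ k\<bar> \<le> 1" using row[of i] by (simp add: abs_square_le_1)
    then have "\<bar>Q $ i $ k\<bar> * \<bar>Q $ i $ k\<bar> \<le> \<bar>Q $ i $ k\<bar> * 1" by (intro mult_left_mono) auto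
    then show ?thesis by (simp add: power2_eq_square abs_mult_self)
  qed
  define A where "A = (\<Sum>i\<in>UNIV. \<bar>Q $ i $ \<sigma> i\<bar>)"
  have "(\<Sum>i\<in>UNIV. (Q $ i $ \<sigma> i)\<^sup>2) \<le> A" unfolding A_def by (rule sum_mono) (rule absle)
  then have RA: "(\<Sum>i\<in>UNIV. R i) \<le> A" using \<sigma>(2) by linarith
  have rowP: "(\<Sum>j\<in>UNIV. ((Q - P) $ i $ j)\<^sup>2) = 2 - 2 * \<bar>Q $ i $ \<sigma> i\<bar>" for i
  proof -
    have pij: "P $ i $ j = (if j = \<sigma> i then sg i else 0)" for j unfolding P_def by (simp only: vec_lambda_beta)
    have sgi: "sg i = (if Q $ i $ \<sigma> i \<ge> 0 then 1 else -1)" unfolding sg_def by simp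
    show ?thesis by (rule rowP_lemma[where Q=Q and i=i and P=P and \<sigma>=\<sigma> and sg=sg, OF row[of i] pij sgi])
  qed
  have frob: "(frob_norm (Q - P))\<^sup>2 = 2 * n - 2 * A"
  proof -
    have "(frob_norm (Q - P))\<^sup>2 = (\<Sum>i\<in>UNIV. \<Sum>j\<in>UNIV. ((Q - P) $ i $ j)\<^sup>2)"
      unfolding frob_norm_def by (simp add: sum_nonneg)
    also have "\<dots> = (\<Sum>i\<in>UNIV. 2 - 2 * \<bar>Q $ i $ \<sigma> i\<bar>)" using rowP by simp
    also have "\<dots> = 2 * n - 2 * A" unfolding A_def n_def by (simp add: sum_subtractf sum_distrib_left)
    finally show ?thesis .
  qed
  have RHS: "\<theta> * (1 - \<theta>) / (2 * n * C_eta_p \<eta> p) * (frob_norm (Q - P))\<^sup>2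
      = \<kappa> * \<theta> * (1 - \<theta>) * (n - A) / n"
  proof -
    have d: "\<theta> * (1 - \<theta>) / (2 * n * inverse \<kappa>) = \<theta> * (1 - \<theta>) * \<kappa> / (2 * n)"
    proof (cases "\<kappa> = 0")
      case True then show ?thesis by simp
    next
      case False
      have "inverse \<kappa> = 1 / \<kappa>" by (simp add: inverse_eq_divide)
      then show ?thesis using False npos by (simp add: field_simps)
    qed
    show ?thesis unfolding eC frob d using npos by (simp add: field_simps)
  qed
  have "\<kappa> * \<theta> * (1 - \<theta>) * (n - A) / n \<le> \<kappa> * \<theta> * (1 - \<theta>) * (n - (\<Sum>i\<in>UNIV. R i)) / n"
    using RA kap th npos by (intro divide_right_mono mult_left_mono) auto
  then have main: "\<theta> * (1 - \<theta>) / (2 * n * C_eta_p \<eta> p) * (frob_norm (Q - P))\<^sup>2 \<le> T - (1 / (n * r * \<gamma>)) * I"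
    using LHS RHS by linarith
  have goal: "\<theta> * (1 + \<eta>\<^sup>2) powr (real p / 2) + (1 - \<theta>) * \<eta> ^ p
      - (1 / (real CARD('n) * real CARD('r) * gamma_p p)) *
        (\<integral>w. entry_pnorm_pow p (Q ** Y_mat \<eta> (fst w) (snd w)) \<partial>?M)
    \<ge> \<theta> * (1 - \<theta>) / (2 * real CARD('n) * C_eta_p \<eta> p) * (frob_norm (Q - P))\<^sup>2"
    using main unfolding T_def e1 e0 I_def n_def r_def \<gamma>_def .
  show ?thesis using sP goal by blast
qed


end
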